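(* Let $\mathcal{V}$ be a real, separable, infinite-dimensional Hilbert space with orthonormal basis $(e_n)_{n\ge1}$, $\mathcal{X}=\{v=\sum_n c_ne_n:\sum_n|c_n|\le1\}$, $\mathcal{Y}=\{v\in\mathcal{V}:\|v\|\le1\}$. For $k\in\mathbb{N}$ let $b_k[n]\in\{0,1\}$ denote the $n$-th bit of the binary representation of $k$, define $f_k:\mathcal{V}\to\mathcal{V}$ by $f_k(v)=\big(\sum_{n\ge1}b_k[n]\langle e_n,v\rangle\big)e_k$, let $f_0=0$, and $\mathcal{F}=\{f_k:k\in\mathbb{N}\}\cup\{f_0\}$. Then $\mathcal{F}\subset S_1(\mathcal{V},\mathcal{V})$; for every $T$ there is a fixed sequence $(x_1,y_1),\dots,(x_T,y_T)\in\mathcal{X}\times\mathcal{Y}$ (namely $x_t=e_t$, $y_t=0$) such that $\mathbb{E}_\sigma\big[\sup_{f\in\mathcal{F}}\sum_{t=1}^T\sigma_t\|f(x_t)-y_t\|^2\big]\ge T/2$ for i.i.d. uniform signs $\sigma_t\in\{-1,1\}$ (so the i.i.d. uniform law of large numbers fails for the squared-loss class of $\mathcal{F}$); and nevertheless $\mathcal{F}$ is batch learnable, i.e. $\limsup_{n\to\infty}\mathcal{E}_n(\mathcal{F})=0$.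
   Context: $S_1(\mathcal{V},\mathcal{V})$ is the set of trace-class (compact, summable singular values) operators. Batch setting: a learning rule $\hat f_n$ maps a sample in $(\mathcal{X}\times\mathcal{Y})^n$ to a predictor $\mathcal{X}\to\mathcal{Y}$; \[\mathcal{E}_n(\mathcal{F})=\inf_{\hat f_n}\sup_{\mathcal{D}}\mathbb{E}_{S\sim\mathcal{D}^n}\Big[\mathbb{E}_{(x,y)\sim\mathcal{D}}\|\hat f_n(x)-y\|^2-\inf_{f\in\mathcal{F}}\mathbb{E}_{(x,y)\sim\mathcal{D}}\|f(x)-y\|^2\Big],\] the supremum being over all distributions $\mathcal{D}$ on $\mathcal{X}\times\mathcal{Y}$. *)

theory Defs
  imports "HOL-Analysis.Analysis" "HOL-Probability.Probability"
begin

definition onb :: "(nat \<Rightarrow> 'v::real_inner) \<Rightarrow> bool" where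
  "onb e \<longleftrightarrow> (\<forall>m n. m \<ge> 1 \<longrightarrow> n \<ge> 1 \<longrightarrow> e m \<bullet> e n = (if m = n then 1 else 0))
              \<and> closure (span (e ` {1..})) = UNIV"

definition compact_op :: "('a::real_normed_vector \<Rightarrow> 'b::real_normed_vector) \<Rightarrow> bool" where
  "compact_op T \<longleftrightarrow> bounded_linear T \<and> compact (closure (T ` cball 0 1))"

definition trace_class :: "('a::real_inner \<Rightarrow> 'b::real_inner) \<Rightarrow> bool" where
  "trace_class T \<longleftrightarrow> compact_op T \<and>
     (\<exists>(s::nat \<Rightarrow> real) (u::nat \<Rightarrow> 'a) (w::nat \<Rightarrow> 'b).
        (\<forall>n. s n \<ge> 0) \<and> summable s \<and>
        (\<forall>m n. s m > 0 \<longrightarrow> s n > 0 \<longrightarrow> u m \<bullet> u n = (if m = n then 1 else 0)) \<and>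
        (\<forall>m n. s m > 0 \<longrightarrow> s n > 0 \<longrightarrow> w m \<bullet> w n = (if m = n then 1 else 0)) \<and>
        (\<forall>v. (\<lambda>n. (s n * (u n \<bullet> v)) *\<^sub>R w n) sums T v))"

text \<open>n-th bit (n \<ge> 1, n = 1 the least significant bit) of k.\<close>
definition bitb :: "nat \<Rightarrow> nat \<Rightarrow> real" where
  "bitb k n = real ((k div 2 ^ (n - 1)) mod 2)"

definition fk :: "(nat \<Rightarrow> 'v::real_inner) \<Rightarrow> nat \<Rightarrow> 'v \<Rightarrow> 'v" where
  "fk e k v = (\<Sum>n. bitb k (Suc n) * (e (Suc n) \<bullet> v)) *\<^sub>R e k"

definition Fcl :: "(nat \<Rightarrow> 'v::real_inner) \<Rightarrow> ('v \<Rightarrow> 'v) set" where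
  "Fcl e = insert (\<lambda>_. 0) (fk e ` {1..})"

definition Xset :: "(nat \<Rightarrow> 'v::real_inner) \<Rightarrow> 'v set" where
  "Xset e = {v. \<exists>c::nat \<Rightarrow> real. (\<lambda>n. c (Suc n) *\<^sub>R e (Suc n)) sums v
                 \<and> summable (\<lambda>n. \<bar>c (Suc n)\<bar>) \<and> (\<Sum>n. \<bar>c (Suc n)\<bar>) \<le> 1}"

definition Yset :: "'v::real_normed_vector set" where
  "Yset = {v. norm v \<le> 1}"

definition risk :: "('v \<times> 'v) measure \<Rightarrow> ('v \<Rightarrow> 'v::real_normed_vector) \<Rightarrow> real" where
  "risk D g = (\<integral>z. (norm (g (fst z) - snd z))\<^sup>2 \<partial>D)"

definition dists :: "(nat \<Rightarrow> 'v::{real_inner,second_countable_topology}) \<Rightarrow> ('v \<times> 'v) measure set" where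
  "dists e = {D. sets D = sets (borel :: ('v \<times> 'v) measure) \<and> prob_space D
                 \<and> (AE z in D. z \<in> Xset e \<times> Yset)}"

definition rules :: "(nat \<Rightarrow> 'v::{real_inner,second_countable_topology}) \<Rightarrow> nat
     \<Rightarrow> ((nat \<Rightarrow> 'v \<times> 'v) \<Rightarrow> 'v \<Rightarrow> 'v) set" where
  "rules e n = {h. (\<lambda>p. h (fst p) (snd p)) \<in>
                      borel_measurable (PiM {..<n} (\<lambda>_. borel) \<Otimes>\<^sub>M borel)
                 \<and> (\<forall>S x. x \<in> Xset e \<longrightarrow> h S x \<in> Yset)}"

definition minimax :: "(nat \<Rightarrow> 'v::{real_inner,second_countable_topology}) \<Rightarrow> nat \<Rightarrow> real" where
  "minimax e n = (INF h\<in>rules e n. SUP D\<in>dists e.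
      \<integral>S. (risk D (h S) - (INF f\<in>Fcl e. risk D f)) \<partial>(PiM {..<n} (\<lambda>_. D)))"

definition rad_sup :: "(nat \<Rightarrow> 'v::real_inner) \<Rightarrow> nat \<Rightarrow> (nat \<Rightarrow> 'v) \<Rightarrow> (nat \<Rightarrow> 'v) \<Rightarrow> real" where
  "rad_sup e T x y = (\<Sum>\<sigma>\<in>PiE {1..T} (\<lambda>_. {-1, 1::real}).
        (SUP f\<in>Fcl e. \<Sum>t=1..T. \<sigma> t * (norm (f (x t) - y t))\<^sup>2)) / 2 ^ T"

end

theory Submission
  imports Defs "HOL-Real_Asymp.Real_Asymp"
begin

definition av :: "(nat \<Rightarrow> 'v::real_inner) \<Rightarrow> nat \<Rightarrow> 'v" where
  "av e k = (\<Sum>n<k. bitb k (Suc n) *\<^sub>R e (Suc n))"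

lemma bitb_01: "bitb k n = 0 \<or> bitb k n = 1"
  unfolding bitb_def by auto

lemma bitb_ge0: "0 \<le> bitb k n" and bitb_le1: "bitb k n \<le> 1"
  using bitb_01[of k n] by auto

lemma bitb_sq: "(bitb k n)\<^sup>2 = bitb k n"
  using bitb_01[of k n] by auto

lemma bitb_zero: assumes "k \<le> n" shows "bitb k (Suc n) = 0"
proof -
  have "k < 2 ^ k" by (rule less_exp)
  also have "(2::nat) ^ k \<le> 2 ^ n" using assms by (simp add: power_increasing)
  finally have "k div 2 ^ n = 0" by simp
  then show ?thesis unfolding bitb_def by simp
qed

lemma bv_finite: "(\<Sum>n. bitb k (Suc n) * (e (Suc n) \<bullet> x)) = (\<Sum>n<k. bitb k (Suc n) * (e (Suc n) \<bullet> x))"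
  by (rule suminf_finite) (auto simp: bitb_zero)

lemma fk_eq: "fk e k x = (av e k \<bullet> x) *\<^sub>R e k"
  unfolding fk_def av_def bv_finite by (simp add: inner_sum_left)

locale ONB =
  fixes e :: "nat \<Rightarrow> 'v::{real_inner, complete_space, second_countable_topology}"
  assumes onb: "onb e"
begin

lemma orth: "1 \<le> m \<Longrightarrow> 1 \<le> n \<Longrightarrow> e m \<bullet> e n = (if m = n then 1 else 0)"
  using onb unfolding onb_def by blast

lemma norm_e: "1 \<le> m \<Longrightarrow> norm (e m) = 1"
  using orth[of m m] by (simp add: norm_eq_sqrt_inner)

lemma Xset_coord:
  assumes s: "(\<lambda>n. c (Suc n) *\<^sub>R e (Suc n)) sums x" and m: "1 \<le> m"
  shows "e m \<bullet> x = c m"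
proof -
  have "(\<lambda>n. e m \<bullet> (c (Suc n) *\<^sub>R e (Suc n))) sums (e m \<bullet> x)"
    by (rule bounded_linear.sums[OF bounded_linear_inner_right s])
  moreover have "(\<lambda>n. e m \<bullet> (c (Suc n) *\<^sub>R e (Suc n))) = (\<lambda>n. if n = m - 1 then c m else 0)"
    using m by (auto simp: orth fun_eq_iff)
  moreover have "(\<lambda>n. if n = m - 1 then c m else 0) sums c m"
    using sums_single[of "m - 1" "\<lambda>_. c m"] by simp
  ultimately show ?thesis using sums_unique2 by metis
qed

lemma av_inner_X:
  assumes "x \<in> Xset e" shows "\<bar>av e k \<bullet> x\<bar> \<le> 1"
proof -
  obtain c where s: "(\<lambda>n. c (Suc n) *\<^sub>R e (Suc n)) sums x"
    and sm: "summable (\<lambda>n. \<bar>c (Suc n)\<bar>)" and le: "(\<Sum>n. \<bar>c (Suc n)\<bar>) \<le> 1"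
    using assms unfolding Xset_def by blast
  have "av e k \<bullet> x = (\<Sum>n<k. bitb k (Suc n) * c (Suc n))"
    unfolding av_def inner_sum_left using Xset_coord[OF s] by simp
  then have "\<bar>av e k \<bullet> x\<bar> \<le> (\<Sum>n<k. \<bar>bitb k (Suc n) * c (Suc n)\<bar>)"
    by (simp add: sum_abs)
  also have "\<dots> \<le> (\<Sum>n<k. \<bar>c (Suc n)\<bar>)"
    by (intro sum_mono) (auto simp: abs_mult bitb_ge0 bitb_le1 mult_left_le_one_le)
  also have "\<dots> \<le> (\<Sum>n. \<bar>c (Suc n)\<bar>)"
    by (rule sum_le_suminf[OF sm]) auto
  finally show ?thesis using le by simp
qed

lemma bessel:
  assumes "finite F" "F \<subseteq> {1..}"
  shows "(\<Sum>k\<in>F. (e k \<bullet> y)\<^sup>2) \<le> (norm y)\<^sup>2"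
proof -
  define p where "p = (\<Sum>k\<in>F. (e k \<bullet> y) *\<^sub>R e k)"
  have ek: "e j \<bullet> p = e j \<bullet> y" if "j \<in> F" for j
  proof -
    have "e j \<bullet> p = (\<Sum>k\<in>F. (e k \<bullet> y) * (e j \<bullet> e k))"
      unfolding p_def by (simp add: inner_sum_right)
    also have "\<dots> = (\<Sum>k\<in>F. if k = j then e j \<bullet> y else 0)"
      using assms that by (intro sum.cong) (auto simp: orth subset_iff)
    also have "\<dots> = e j \<bullet> y" using assms(1) that by simp
    finally show ?thesis .
  qed
  have pp: "p \<bullet> p = (\<Sum>k\<in>F. (e k \<bullet> y)\<^sup>2)"
    by (subst (1) p_def) (simp add: inner_sum_left ek power2_eq_square)
  have yp: "y \<bullet> p = (\<Sum>k\<in>F. (e k \<bullet> y)\<^sup>2)"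
    unfolding p_def by (simp add: inner_sum_right power2_eq_square inner_commute)
  have "0 \<le> (y - p) \<bullet> (y - p)" by simp
  also have "\<dots> = y \<bullet> y - 2 * (y \<bullet> p) + p \<bullet> p"
    by (simp add: inner_diff inner_commute)
  finally show ?thesis using pp yp by (simp add: power2_norm_eq_inner)
qed

lemma coord_sq_le: "1 \<le> k \<Longrightarrow> (e k \<bullet> y)\<^sup>2 \<le> (norm y)\<^sup>2"
  using bessel[of "{k}" y] by simp

lemma loss_eq:
  assumes "1 \<le> k"
  shows "(norm (fk e k x - y))\<^sup>2 = (norm y)\<^sup>2 - (2 * (av e k \<bullet> x) * (e k \<bullet> y) - (av e k \<bullet> x)\<^sup>2)"
proof -
  have "e k \<bullet> e k = 1" using orth[of k k] assms by simp
  then show ?thesis unfolding fk_eq power2_norm_eq_inner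
    by (simp add: inner_diff algebra_simps power2_eq_square inner_commute)
qed

end

lemma trace_class_rank1:
  fixes a c :: "'v::real_inner"
  assumes ac: "a = 0 \<or> c \<bullet> c = 1"
  shows "trace_class (\<lambda>v. (a \<bullet> v) *\<^sub>R c)"
proof -
  let ?T = "\<lambda>v. (a \<bullet> v) *\<^sub>R c"
  have bl: "bounded_linear ?T"
    by (intro bounded_linear_scaleR_left[THEN bounded_linear_compose] bounded_linear_inner_right)
  define K where "K = (\<lambda>t. t *\<^sub>R c) ` {-norm a..norm a}"
  have Kc: "compact K" unfolding K_def
    by (intro compact_continuous_image continuous_intros) auto
  have sub: "?T ` cball 0 1 \<subseteq> K"
  proof
    fix z assume "z \<in> ?T ` cball 0 1"
    then obtain v where v: "norm v \<le> 1" "z = ?T v" by auto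
    have "\<bar>a \<bullet> v\<bar> \<le> norm a * norm v" by (rule Cauchy_Schwarz_ineq2)
    also have "\<dots> \<le> norm a" using v(1) by (simp add: mult_left_le)
    finally have "a \<bullet> v \<in> {-norm a..norm a}" by auto
    then show "z \<in> K" unfolding K_def using v by (intro image_eqI[of _ _ "a \<bullet> v"]) auto
  qed
  have "closure (?T ` cball 0 1) \<subseteq> K"
    using closure_minimal[OF sub compact_imp_closed[OF Kc]] .
  then have "compact (closure (?T ` cball 0 1))"
    using compact_Int_closed[OF Kc closed_closure, of "?T ` cball 0 1"] by (simp add: Int_absorb1)
  with bl have cop: "compact_op ?T" unfolding compact_op_def by simp
  define s where "s = (\<lambda>n::nat. if n = 0 then norm a else 0)"
  define u where "u = (\<lambda>n::nat. a /\<^sub>R norm a)"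
  define w where "w = (\<lambda>n::nat. c)"
  have "(\<forall>n. s n \<ge> 0) \<and> summable s \<and>
        (\<forall>m n. s m > 0 \<longrightarrow> s n > 0 \<longrightarrow> u m \<bullet> u n = (if m = n then 1 else 0)) \<and>
        (\<forall>m n. s m > 0 \<longrightarrow> s n > 0 \<longrightarrow> w m \<bullet> w n = (if m = n then 1 else 0)) \<and>
        (\<forall>v. (\<lambda>n. (s n * (u n \<bullet> v)) *\<^sub>R w n) sums ?T v)"
  proof (intro conjI allI impI)
    show "summable s" unfolding s_def by (rule summable_single)
  next
    fix m n assume "0 < s m" "0 < s n"
    then have "m = 0" "n = 0" "a \<noteq> 0" unfolding s_def by (auto split: if_splits)
    then show "u m \<bullet> u n = (if m = n then 1 else 0)"
      unfolding u_def by (simp add: power2_norm_eq_inner[symmetric] power2_eq_square)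
    show "w m \<bullet> w n = (if m = n then 1 else 0)" using ac \<open>m=0\<close> \<open>n=0\<close> \<open>a\<noteq>0\<close> unfolding w_def by simp
  next
    fix v
    have "(\<lambda>n. (s n * (u n \<bullet> v)) *\<^sub>R w n) = (\<lambda>n. if n = 0 then ?T v else 0)"
      unfolding s_def u_def w_def by (cases "a = 0") (auto simp: fun_eq_iff)
    then show "(\<lambda>n. (s n * (u n \<bullet> v)) *\<^sub>R w n) sums ?T v"
      using sums_single[of 0 "\<lambda>_. ?T v"] by simp
  qed (auto simp: s_def)
  then show ?thesis unfolding trace_class_def using cop by blast
qed

context ONB begin

lemma part1: "Fcl e \<subseteq> {T. trace_class T}"
proof
  fix T assume "T \<in> Fcl e"
  then consider "T = (\<lambda>_. 0)" | k where "1 \<le> k" "T = fk e k" unfolding Fcl_def by auto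
  then show "T \<in> {T. trace_class T}"
  proof cases
    case 1
    then have "T = (\<lambda>v. ((0::'v) \<bullet> v) *\<^sub>R e 1)" by simp
    then show ?thesis using trace_class_rank1[of "0::'v" "e 1"] by simp
  next
    case (2 k)
    then have "T = (\<lambda>v. (av e k \<bullet> v) *\<^sub>R e k)" by (simp add: fun_eq_iff fk_eq)
    moreover have "e k \<bullet> e k = 1" using orth[of k k] 2 by simp
    ultimately show ?thesis using trace_class_rank1[of "av e k" "e k"] by simp
  qed
qed

lemma av_inner_e: "1 \<le> t \<Longrightarrow> av e k \<bullet> e t = bitb k t"
proof -
  assume t: "1 \<le> t"
  have "av e k \<bullet> e t = (\<Sum>n<k. if n = t - 1 then bitb k t else 0)"
    unfolding av_def inner_sum_left using t by (intro sum.cong) (auto simp: orth)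
  also have "\<dots> = bitb k t"
    using t bitb_zero[of k "t - 1"] by auto
  finally show ?thesis .
qed

lemma e_in_X: "1 \<le> t \<Longrightarrow> e t \<in> Xset e"
proof -
  assume t: "1 \<le> t"
  define c where "c = (\<lambda>n::nat. if n = t then 1 else (0::real))"
  have eq: "(\<lambda>n. c (Suc n) *\<^sub>R e (Suc n)) = (\<lambda>n. if n = t - 1 then e t else 0)"
    using t by (auto simp: c_def fun_eq_iff)
  have eq2: "(\<lambda>n. \<bar>c (Suc n)\<bar>) = (\<lambda>n. if n = t - 1 then 1 else 0)"
    using t by (auto simp: c_def fun_eq_iff)
  have "(\<lambda>n. c (Suc n) *\<^sub>R e (Suc n)) sums e t"
    unfolding eq using sums_single[of "t - 1" "\<lambda>_. e t"] by simp
  moreover have "(\<lambda>n. \<bar>c (Suc n)\<bar>) sums 1"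
    unfolding eq2 using sums_single[of "t - 1" "\<lambda>_. 1::real"] by simp
  ultimately show ?thesis unfolding Xset_def
    by (intro CollectI exI[of _ c] conjI) (auto simp: sums_iff)
qed

lemma fk_e_sq: "1 \<le> k \<Longrightarrow> 1 \<le> t \<Longrightarrow> (norm (fk e k (e t) - 0))\<^sup>2 = bitb k t"
  by (simp add: fk_eq av_inner_e norm_e bitb_sq)

lemma bitb_horner:
  "1 \<le> t \<Longrightarrow> bitb (horner_sum of_bool 2 bs) t = (if t - 1 < length bs \<and> bs ! (t - 1) then 1 else 0)"
proof -
  assume t: "1 \<le> t"
  have "bit (horner_sum of_bool 2 bs :: nat) (t - 1) = (t - 1 < length bs \<and> bs ! (t - 1))"
    by (simp add: bit_horner_sum_bit_iff)
  moreover have "((horner_sum of_bool 2 bs :: nat) div 2 ^ (t - 1)) mod 2 = of_bool (bit (horner_sum of_bool 2 bs :: nat) (t - 1))"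
    by (simp add: bit_iff_odd mod_2_eq_odd)
  ultimately show ?thesis unfolding bitb_def by simp
qed

end

context ONB begin

lemma part2: "rad_sup e T e (\<lambda>_. 0) \<ge> real T / 2"
proof -
  define Sg where "Sg = PiE {1..T} (\<lambda>_. {-1, 1::real})"
  define V where "V = (\<lambda>\<sigma> (f::'v\<Rightarrow>'v). \<Sum>t=1..T. \<sigma> t * (norm (f (e t) - 0))\<^sup>2)"
  define P where "P = (\<lambda>\<sigma>::nat\<Rightarrow>real. \<Sum>t=1..T. if \<sigma> t = 1 then 1 else (0::real))"
  have sq01: "0 \<le> (norm (f (e t) - 0))\<^sup>2 \<and> (norm (f (e t) - 0))\<^sup>2 \<le> 1" if "f \<in> Fcl e" "1 \<le> t" for f t
    using that unfolding Fcl_def using fk_e_sq bitb_ge0 bitb_le1 by fastforce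
  have supP: "(SUP f\<in>Fcl e. V \<sigma> f) \<ge> P \<sigma>" if \<sigma>: "\<sigma> \<in> Sg" for \<sigma>
  proof -
    have bdd: "bdd_above (V \<sigma> ` Fcl e)"
    proof (rule bdd_aboveI2)
      fix f assume f: "f \<in> Fcl e"
      have "V \<sigma> f \<le> (\<Sum>t=1..T. 1)" unfolding V_def
      proof (rule sum_mono)
        fix t assume t: "t \<in> {1..T}"
        then have "\<sigma> t = 1 \<or> \<sigma> t = -1" using \<sigma> unfolding Sg_def by auto
        moreover have "0 \<le> (norm (f (e t) - 0))\<^sup>2" by simp
        moreover have "(norm (f (e t) - 0))\<^sup>2 \<le> 1" using sq01[OF f, of t] t by auto
        ultimately show "\<sigma> t * (norm (f (e t) - 0))\<^sup>2 \<le> 1"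
          by (metis mult_cancel_right1 mult_minus_left neg_le_0_iff_le order_trans zero_le_one)
      qed
      then show "V \<sigma> f \<le> real T" by simp
    qed
    define bs where "bs = map (\<lambda>i. \<sigma> (Suc i) = 1) [0..<T]"
    define k where "k = (horner_sum of_bool 2 bs :: nat)"
    define fw where "fw = (if k = 0 then (\<lambda>_. 0) else fk e k)"
    have fw: "fw \<in> Fcl e" unfolding fw_def Fcl_def by auto
    have bk: "bitb k t = (if \<sigma> t = 1 then 1 else 0)" if "t \<in> {1..T}" for t
      using that unfolding k_def by (subst bitb_horner) (auto simp: bs_def)
    have "V \<sigma> fw = (\<Sum>t=1..T. \<sigma> t * bitb k t)" unfolding V_def
    proof (rule sum.cong)
      fix t assume t: "t \<in> {1..T}"
      show "\<sigma> t * (norm (fw (e t) - 0))\<^sup>2 = \<sigma> t * bitb k t"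
      proof (cases "k = 0")
        case True then show ?thesis by (simp add: fw_def bitb_def)
      next
        case False then show ?thesis using t fk_e_sq[of k t] by (simp add: fw_def)
      qed
    qed simp
    also have "\<dots> = P \<sigma>" unfolding P_def by (intro sum.cong) (auto simp: bk)
    finally have "V \<sigma> fw = P \<sigma>" .
    then show ?thesis using cSUP_upper[OF fw bdd] by simp
  qed
  define neg where "neg = (\<lambda>\<sigma>::nat\<Rightarrow>real. restrict (\<lambda>t. - \<sigma> t) {1..T})"
  have negS: "neg \<sigma> \<in> Sg" if "\<sigma> \<in> Sg" for \<sigma> using that unfolding Sg_def neg_def by auto
  have negneg: "neg (neg \<sigma>) = \<sigma>" if "\<sigma> \<in> Sg" for \<sigma>
    using that unfolding Sg_def neg_def by (auto simp: fun_eq_iff PiE_def extensional_def)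
  have bij: "bij_betw neg Sg Sg"
    by (rule bij_betwI[of _ _ _ neg]) (auto simp: negS negneg)
  have sumneg: "(\<Sum>\<sigma>\<in>Sg. P \<sigma>) = (\<Sum>\<sigma>\<in>Sg. P (neg \<sigma>))"
    using sum.reindex_bij_betw[OF bij, of P] by simp
  have Ppn: "P \<sigma> + P (neg \<sigma>) = real T" if "\<sigma> \<in> Sg" for \<sigma>
  proof -
    have "P \<sigma> + P (neg \<sigma>) = (\<Sum>t=1..T. (1::real))" unfolding P_def sum.distrib[symmetric]
    proof (rule sum.cong)
      fix t assume t: "t \<in> {1..T}"
      then have "\<sigma> t = 1 \<or> \<sigma> t = -1" using that unfolding Sg_def by auto
      then show "(if \<sigma> t = 1 then 1 else 0) + (if neg \<sigma> t = 1 then 1 else 0) = (1::real)"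
        using t unfolding neg_def by auto
    qed simp
    then show ?thesis by simp
  qed
  have "card {-1, 1::real} = 2" by simp
  then have cardS: "card Sg = 2 ^ T" unfolding Sg_def by (simp add: card_PiE) (simp add: numeral_2_eq_2)
  have finS: "finite Sg" unfolding Sg_def by (simp add: finite_PiE)
  have "2 * (\<Sum>\<sigma>\<in>Sg. P \<sigma>) = (\<Sum>\<sigma>\<in>Sg. P \<sigma> + P (neg \<sigma>))"
    by (subst sum.distrib) (simp add: sumneg[symmetric])
  also have "\<dots> = (\<Sum>\<sigma>\<in>Sg. real T)" by (intro sum.cong) (auto simp: Ppn)
  also have "\<dots> = 2 ^ T * real T" by (simp add: cardS)
  finally have sumP: "(\<Sum>\<sigma>\<in>Sg. P \<sigma>) = 2 ^ T * real T / 2" by simp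
  have "(\<Sum>\<sigma>\<in>Sg. P \<sigma>) \<le> (\<Sum>\<sigma>\<in>Sg. SUP f\<in>Fcl e. V \<sigma> f)"
    by (intro sum_mono supP)
  then have "2 ^ T * real T / 2 / 2 ^ T \<le> (\<Sum>\<sigma>\<in>Sg. SUP f\<in>Fcl e. V \<sigma> f) / 2 ^ T"
    using sumP by (intro divide_right_mono) auto
  then show ?thesis unfolding rad_sup_def Sg_def[symmetric] V_def by simp
qed

end

locale iid = prob_space D for D :: "'a measure" +
  fixes n :: nat
begin

abbreviation "PS \<equiv> PiM {..<n} (\<lambda>_. D)"

lemma prob_PS: "prob_space PS"
  by (rule prob_space_PiM) (simp add: prob_space_axioms)

lemma integrable_PS_bound:
  fixes f :: "(nat \<Rightarrow> 'a) \<Rightarrow> real"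
  assumes "f \<in> borel_measurable PS" "\<And>S. \<bar>f S\<bar> \<le> B"
  shows "integrable PS f"
proof -
  interpret P: prob_space PS by (rule prob_PS)
  show ?thesis using assms by (intro P.integrable_const_bound[of _ B]) auto
qed

lemma integrable_D_bound:
  fixes f :: "'a \<Rightarrow> real"
  assumes "f \<in> borel_measurable D" "\<And>x. \<bar>f x\<bar> \<le> B"
  shows "integrable D f"
  using assms by (intro integrable_const_bound[of _ B]) auto

lemma meas_comp: "f \<in> borel_measurable D \<Longrightarrow> i < n \<Longrightarrow> (\<lambda>S. f (S i)) \<in> borel_measurable PS"
  by (rule measurable_compose[OF measurable_component_singleton]) auto

lemma int_prod:
  fixes F :: "nat \<Rightarrow> 'a \<Rightarrow> real"
  assumes J: "J \<subseteq> {..<n}" and F: "\<And>l. l \<in> J \<Longrightarrow> F l \<in> borel_measurable D"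
    and B: "\<And>l x. l \<in> J \<Longrightarrow> \<bar>F l x\<bar> \<le> B"
  shows "(\<integral>S. (\<Prod>l\<in>J. F l (S l)) \<partial>PS) = (\<Prod>l\<in>J. \<integral>x. F l x \<partial>D)"
proof -
  have one: "(\<integral>x. 1 \<partial>D) = (1::real)" using prob_space by simp
  have PPS: "product_sigma_finite (\<lambda>_::nat. D)"
    unfolding product_sigma_finite_def by (simp add: sigma_finite_measure_axioms)
  define f where "f = (\<lambda>l. if l \<in> J then F l else (\<lambda>_. 1::real))"
  have int: "integrable D (f l)" for l
  proof (cases "l \<in> J")
    case True then show ?thesis unfolding f_def using F B by (auto intro!: integrable_D_bound)
  next
    case False then show ?thesis unfolding f_def by simp
  qed
  have "(\<integral>S. (\<Prod>l\<in>{..<n}. f l (S l)) \<partial>PS) = (\<Prod>l\<in>{..<n}. integral\<^sup>L D (f l))"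
    by (rule product_sigma_finite.product_integral_prod[OF PPS]) (auto simp: int)
  moreover have "(\<lambda>S. \<Prod>l\<in>{..<n}. f l (S l)) = (\<lambda>S. \<Prod>l\<in>J. F l (S l))"
    using J by (intro ext prod.mono_neutral_cong_right) (auto simp: f_def)
  moreover have "(\<Prod>l\<in>{..<n}. integral\<^sup>L D (f l)) = (\<Prod>l\<in>J. \<integral>x. F l x \<partial>D)"
    using J by (intro prod.mono_neutral_cong_right) (auto simp: f_def one prob_space)
  ultimately show ?thesis by simp
qed

lemma int_two:
  fixes F G :: "'a \<Rightarrow> real"
  assumes "i < n" "j < n" "i \<noteq> j" "F \<in> borel_measurable D" "G \<in> borel_measurable D"
    "\<And>x. \<bar>F x\<bar> \<le> B" "\<And>x. \<bar>G x\<bar> \<le> B"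
  shows "(\<integral>S. F (S i) * G (S j) \<partial>PS) = (\<integral>x. F x \<partial>D) * (\<integral>x. G x \<partial>D)"
proof -
  define H where "H = (\<lambda>l. if l = i then F else G)"
  have "(\<integral>S. (\<Prod>l\<in>{i,j}. H l (S l)) \<partial>PS) = (\<Prod>l\<in>{i,j}. \<integral>x. H l x \<partial>D)"
    using assms by (intro int_prod[of _ _ B]) (auto simp: H_def)
  then show ?thesis using assms by (simp add: H_def)
qed

lemma int_three:
  fixes F G A :: "'a \<Rightarrow> real"
  assumes "a < n" "i < n" "j < n" "a \<noteq> i" "a \<noteq> j" "i \<noteq> j"
    "A \<in> borel_measurable D" "F \<in> borel_measurable D" "G \<in> borel_measurable D"
    "\<And>x. \<bar>A x\<bar> \<le> B" "\<And>x. \<bar>F x\<bar> \<le> B" "\<And>x. \<bar>G x\<bar> \<le> B"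
  shows "(\<integral>S. A (S a) * F (S i) * G (S j) \<partial>PS) = (\<integral>x. A x \<partial>D) * (\<integral>x. F x \<partial>D) * (\<integral>x. G x \<partial>D)"
proof -
  define H where "H = (\<lambda>l. if l = a then A else if l = i then F else G)"
  have "(\<integral>S. (\<Prod>l\<in>{a,i,j}. H l (S l)) \<partial>PS) = (\<Prod>l\<in>{a,i,j}. \<integral>x. H l x \<partial>D)"
    using assms by (intro int_prod[of _ _ B]) (auto simp: H_def)
  then show ?thesis using assms by (simp add: H_def mult.assoc)
qed

lemma int_one:
  fixes F :: "'a \<Rightarrow> real"
  assumes "i < n" "F \<in> borel_measurable D" "\<And>x. \<bar>F x\<bar> \<le> B"
  shows "(\<integral>S. F (S i) \<partial>PS) = (\<integral>x. F x \<partial>D)"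
  using int_prod[of "{i}" "\<lambda>_. F" B] assms by simp

end

lemma sq_le_bound: "\<bar>a::real\<bar> \<le> b \<Longrightarrow> a * a \<le> b * b"
  by (metis abs_ge_zero abs_le_square_iff abs_of_nonneg order_trans power2_eq_square)

context iid begin

lemma centered:
  fixes W :: "'a \<Rightarrow> real"
  assumes W: "W \<in> borel_measurable D" "\<And>x. \<bar>W x\<bar> \<le> B"
  defines "\<mu> \<equiv> \<integral>x. W x \<partial>D"
  shows "\<bar>\<mu>\<bar> \<le> B" "(\<integral>x. W x - \<mu> \<partial>D) = 0"
    "(\<integral>x. (W x - \<mu>)\<^sup>2 \<partial>D) = (\<integral>x. (W x)\<^sup>2 \<partial>D) - \<mu>\<^sup>2"
proof -
  have iW: "integrable D W" using W by (intro integrable_D_bound) auto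
  have iW2: "integrable D (\<lambda>x. (W x)\<^sup>2)"
    using W by (intro integrable_D_bound[of _ "B*B"]) (auto simp: power2_eq_square abs_mult intro: sq_le_bound)
  have "\<bar>\<mu>\<bar> \<le> (\<integral>x. \<bar>W x\<bar> \<partial>D)" unfolding \<mu>_def by (rule integral_abs_bound)
  also have "\<dots> \<le> (\<integral>x. B \<partial>D)" using W iW by (intro integral_mono) auto
  finally show "\<bar>\<mu>\<bar> \<le> B" using prob_space by simp
  show "(\<integral>x. W x - \<mu> \<partial>D) = 0" using iW prob_space by (simp add: \<mu>_def)
  have "(\<lambda>x. (W x - \<mu>)\<^sup>2) = (\<lambda>x. (W x)\<^sup>2 - 2 * \<mu> * W x + \<mu>\<^sup>2)"
    by (auto simp: power2_eq_square algebra_simps)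
  moreover have "(\<integral>x. (W x)\<^sup>2 - 2 * \<mu> * W x + \<mu>\<^sup>2 \<partial>D) = (\<integral>x. (W x)\<^sup>2 \<partial>D) - 2 * \<mu> * \<mu> + \<mu>\<^sup>2"
    using iW iW2 prob_space by (simp add: \<mu>_def)
  ultimately show "(\<integral>x. (W x - \<mu>)\<^sup>2 \<partial>D) = (\<integral>x. (W x)\<^sup>2 \<partial>D) - \<mu>\<^sup>2"
    by (simp add: power2_eq_square)
qed

lemma variance_mean:
  fixes W :: "'a \<Rightarrow> real"
  assumes W: "W \<in> borel_measurable D" "\<And>x. \<bar>W x\<bar> \<le> B"
    and I: "I \<subseteq> {..<n}" "card I = m" "0 < m"
  defines "\<mu> \<equiv> \<integral>x. W x \<partial>D"
  shows "(\<integral>S. ((\<Sum>i\<in>I. W (S i)) / m - \<mu>)\<^sup>2 \<partial>PS) = ((\<integral>x. (W x)\<^sup>2 \<partial>D) - \<mu>\<^sup>2) / m"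
proof -
  have B0: "0 \<le> B" using W(2)[of undefined] by simp
  have fin: "finite I" using I by (metis card_gt_0_iff)
  have mu: "\<bar>\<mu>\<bar> \<le> B" "(\<integral>x. W x - \<mu> \<partial>D) = 0" "(\<integral>x. (W x - \<mu>)\<^sup>2 \<partial>D) = (\<integral>x. (W x)\<^sup>2 \<partial>D) - \<mu>\<^sup>2"
    using centered[OF W] unfolding \<mu>_def by auto
  define W0 where "W0 = (\<lambda>x. W x - \<mu>)"
  define K where "K = 4 * B * B + 3 * B"
  have W0m: "W0 \<in> borel_measurable D" "(\<lambda>x. (W0 x)\<^sup>2) \<in> borel_measurable D" using W unfolding W0_def by auto
  have W0b: "\<bar>W0 x\<bar> \<le> K" "\<bar>(W0 x)\<^sup>2\<bar> \<le> K" for x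
  proof -
    have a: "\<bar>W0 x\<bar> \<le> 2 * B" unfolding W0_def using W(2)[of x] mu(1) by linarith
    then show "\<bar>W0 x\<bar> \<le> K" unfolding K_def using B0 by (smt (verit) mult_nonneg_nonneg)
    have "\<bar>(W0 x)\<^sup>2\<bar> \<le> (2 * B) * (2 * B)"
      using sq_le_bound[OF a] by (simp add: power2_eq_square abs_mult)
    then show "\<bar>(W0 x)\<^sup>2\<bar> \<le> K" unfolding K_def using B0 by simp
  qed
  have pt: "((\<Sum>i\<in>I. W (S i)) / m - \<mu>)\<^sup>2 = (\<Sum>i\<in>I. \<Sum>j\<in>I. W0 (S i) * W0 (S j)) / (real m)\<^sup>2" for S
  proof -
    have "(\<Sum>i\<in>I. W (S i)) / m - \<mu> = (\<Sum>i\<in>I. W0 (S i)) / m"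
      using I by (simp add: W0_def sum_subtractf field_simps)
    then show ?thesis by (simp add: power2_eq_square sum_product power_divide)
  qed
  have ij: "(\<integral>S. W0 (S i) * W0 (S j) \<partial>PS) = (if i = j then (\<integral>x. (W x)\<^sup>2 \<partial>D) - \<mu>\<^sup>2 else 0)"
    if "i \<in> I" "j \<in> I" for i j
  proof (cases "i = j")
    case True
    have "(\<integral>S. W0 (S i) * W0 (S j) \<partial>PS) = (\<integral>S. (\<lambda>x. (W0 x)\<^sup>2) (S i) \<partial>PS)"
      using True by (simp add: power2_eq_square)
    also have "\<dots> = (\<integral>x. (W0 x)\<^sup>2 \<partial>D)" using that I W0m W0b by (intro int_one) auto
    finally show ?thesis using True mu(3) by (simp add: W0_def)
  next
    case False
    have "(\<integral>S. W0 (S i) * W0 (S j) \<partial>PS) = (\<integral>x. W0 x \<partial>D) * (\<integral>x. W0 x \<partial>D)"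
      using that I W0m W0b False by (intro int_two) auto
    then show ?thesis using False mu(2) by (simp add: W0_def)
  qed
  have intg: "integrable PS (\<lambda>S. W0 (S i) * W0 (S j))" if "i \<in> I" "j \<in> I" for i j
  proof (rule integrable_PS_bound[of _ "K * K"])
    show "(\<lambda>S. W0 (S i) * W0 (S j)) \<in> borel_measurable PS"
      using that I W0m by (auto intro!: borel_measurable_times meas_comp)
    show "\<bar>W0 (S i) * W0 (S j)\<bar> \<le> K * K" for S
      using W0b(1)[of "S i"] W0b(1)[of "S j"] by (simp add: abs_mult mult_mono')
  qed
  have "(\<integral>S. ((\<Sum>i\<in>I. W (S i)) / m - \<mu>)\<^sup>2 \<partial>PS)
      = (\<integral>S. (\<Sum>i\<in>I. \<Sum>j\<in>I. W0 (S i) * W0 (S j)) \<partial>PS) / (real m)\<^sup>2"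
    unfolding pt by simp
  also have "(\<integral>S. (\<Sum>i\<in>I. \<Sum>j\<in>I. W0 (S i) * W0 (S j)) \<partial>PS)
      = (\<Sum>i\<in>I. \<Sum>j\<in>I. (\<integral>S. W0 (S i) * W0 (S j) \<partial>PS))"
    using intg by (simp add: integral_sum integrable_sum)
  also have "\<dots> = (\<Sum>i\<in>I. \<Sum>j\<in>I. if i = j then (\<integral>x. (W x)\<^sup>2 \<partial>D) - \<mu>\<^sup>2 else 0)"
    using ij by simp
  also have "\<dots> = m * ((\<integral>x. (W x)\<^sup>2 \<partial>D) - \<mu>\<^sup>2)" using fin I by simp
  finally show ?thesis using I by (simp add: power2_eq_square)
qed

lemma cross_mean:
  fixes W A :: "'a \<Rightarrow> real"
  assumes W: "W \<in> borel_measurable D" "\<And>x. \<bar>W x\<bar> \<le> B"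
    and A: "A \<in> borel_measurable D" "\<And>x. \<bar>A x\<bar> \<le> B"
    and I: "I \<subseteq> {..<n}" "card I = m" "0 < m" "I' \<subseteq> {..<n}" "card I' = m" "I \<inter> I' = {}"
  defines "\<mu> \<equiv> \<integral>x. W x \<partial>D"
  shows "(\<integral>S. ((\<Sum>a\<in>I'. A (S a)) / m) * ((\<Sum>i\<in>I. W (S i)) / m - \<mu>)\<^sup>2 \<partial>PS)
     = (\<integral>x. A x \<partial>D) * ((\<integral>x. (W x)\<^sup>2 \<partial>D) - \<mu>\<^sup>2) / m"
proof -
  have B0: "0 \<le> B" using W(2)[of undefined] by simp
  have fin: "finite I" "finite I'" using I by (metis card_gt_0_iff)+
  have mu: "\<bar>\<mu>\<bar> \<le> B" "(\<integral>x. W x - \<mu> \<partial>D) = 0" "(\<integral>x. (W x - \<mu>)\<^sup>2 \<partial>D) = (\<integral>x. (W x)\<^sup>2 \<partial>D) - \<mu>\<^sup>2"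
    using centered[OF W] unfolding \<mu>_def by auto
  define W0 where "W0 = (\<lambda>x. W x - \<mu>)"
  define K where "K = 4 * B * B + 3 * B"
  have W0m: "W0 \<in> borel_measurable D" "(\<lambda>x. (W0 x)\<^sup>2) \<in> borel_measurable D" using W unfolding W0_def by auto
  have W0b: "\<bar>W0 x\<bar> \<le> K" "\<bar>(W0 x)\<^sup>2\<bar> \<le> K" "\<bar>A x\<bar> \<le> K" for x
  proof -
    have a: "\<bar>W0 x\<bar> \<le> 2 * B" unfolding W0_def using W(2)[of x] mu(1) by linarith
    then show "\<bar>W0 x\<bar> \<le> K" unfolding K_def using B0 by (smt (verit) mult_nonneg_nonneg)
    have "\<bar>(W0 x)\<^sup>2\<bar> \<le> (2 * B) * (2 * B)"
      using sq_le_bound[OF a] by (simp add: power2_eq_square abs_mult)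
    then show "\<bar>(W0 x)\<^sup>2\<bar> \<le> K" unfolding K_def using B0 by simp
    show "\<bar>A x\<bar> \<le> K" unfolding K_def using B0 A(2)[of x] by (smt (verit) mult_nonneg_nonneg)
  qed
  have pt: "((\<Sum>a\<in>I'. A (S a)) / m) * ((\<Sum>i\<in>I. W (S i)) / m - \<mu>)\<^sup>2
     = (\<Sum>a\<in>I'. \<Sum>i\<in>I. \<Sum>j\<in>I. A (S a) * W0 (S i) * W0 (S j)) / (real m ^ 3)" for S
  proof -
    have h1: "(\<Sum>i\<in>I. W (S i)) / m - \<mu> = (\<Sum>i\<in>I. W0 (S i)) / m"
      using I by (simp add: W0_def sum_subtractf field_simps)
    have "(\<Sum>a\<in>I'. A (S a)) * (\<Sum>i\<in>I. W0 (S i)) * (\<Sum>j\<in>I. W0 (S j))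
       = (\<Sum>a\<in>I'. A (S a) * ((\<Sum>i\<in>I. W0 (S i)) * (\<Sum>j\<in>I. W0 (S j))))"
      by (subst mult.assoc) (rule sum_distrib_right)
    also have "\<dots> = (\<Sum>a\<in>I'. A (S a) * (\<Sum>i\<in>I. \<Sum>j\<in>I. W0 (S i) * W0 (S j)))"
      by (simp only: sum_product)
    also have "\<dots> = (\<Sum>a\<in>I'. \<Sum>i\<in>I. \<Sum>j\<in>I. A (S a) * (W0 (S i) * W0 (S j)))"
      by (simp only: sum_distrib_left)
    also have "\<dots> = (\<Sum>a\<in>I'. \<Sum>i\<in>I. \<Sum>j\<in>I. A (S a) * W0 (S i) * W0 (S j))"
      by (simp only: mult.assoc)
    finally have h2: "(\<Sum>a\<in>I'. A (S a)) * (\<Sum>i\<in>I. W0 (S i)) * (\<Sum>j\<in>I. W0 (S j))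
       = (\<Sum>a\<in>I'. \<Sum>i\<in>I. \<Sum>j\<in>I. A (S a) * W0 (S i) * W0 (S j))" .
    show ?thesis using I h1 h2[symmetric]
      by (simp add: power2_eq_square power3_eq_cube field_simps)
  qed
  have aij: "(\<integral>S. A (S a) * W0 (S i) * W0 (S j) \<partial>PS)
      = (if i = j then (\<integral>x. A x \<partial>D) * ((\<integral>x. (W x)\<^sup>2 \<partial>D) - \<mu>\<^sup>2) else 0)"
    if "a \<in> I'" "i \<in> I" "j \<in> I" for a i j
  proof (cases "i = j")
    case True
    have "(\<integral>S. A (S a) * W0 (S i) * W0 (S j) \<partial>PS) = (\<integral>S. A (S a) * (\<lambda>x. (W0 x)\<^sup>2) (S i) \<partial>PS)"
      using True by (simp add: power2_eq_square mult.assoc)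
    also have "\<dots> = (\<integral>x. A x \<partial>D) * (\<integral>x. (W0 x)\<^sup>2 \<partial>D)"
      using that I W0m W0b A by (intro int_two) auto
    finally show ?thesis using True mu(3) by (simp add: W0_def)
  next
    case False
    have "(\<integral>S. A (S a) * W0 (S i) * W0 (S j) \<partial>PS) = (\<integral>x. A x \<partial>D) * (\<integral>x. W0 x \<partial>D) * (\<integral>x. W0 x \<partial>D)"
      using that I W0m W0b False A by (intro int_three) auto
    then show ?thesis using False mu(2) by (simp add: W0_def)
  qed
  have intg: "integrable PS (\<lambda>S. A (S a) * W0 (S i) * W0 (S j))" if "a \<in> I'" "i \<in> I" "j \<in> I" for a i j
  proof (rule integrable_PS_bound[of _ "K * K * K"])
    show "(\<lambda>S. A (S a) * W0 (S i) * W0 (S j)) \<in> borel_measurable PS"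
      using that I W0m A by (auto intro!: borel_measurable_times meas_comp)
    show "\<bar>A (S a) * W0 (S i) * W0 (S j)\<bar> \<le> K * K * K" for S
      using W0b(1)[of "S i"] W0b(1)[of "S j"] W0b(3)[of "S a"]
      by (simp add: abs_mult mult_mono' mult_nonneg_nonneg)
  qed
  have "(\<integral>S. ((\<Sum>a\<in>I'. A (S a)) / m) * ((\<Sum>i\<in>I. W (S i)) / m - \<mu>)\<^sup>2 \<partial>PS)
      = (\<integral>S. (\<Sum>a\<in>I'. \<Sum>i\<in>I. \<Sum>j\<in>I. A (S a) * W0 (S i) * W0 (S j)) \<partial>PS) / (real m ^ 3)"
    unfolding pt by simp
  also have "(\<integral>S. (\<Sum>a\<in>I'. \<Sum>i\<in>I. \<Sum>j\<in>I. A (S a) * W0 (S i) * W0 (S j)) \<partial>PS)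
      = (\<Sum>a\<in>I'. \<Sum>i\<in>I. \<Sum>j\<in>I. (\<integral>S. A (S a) * W0 (S i) * W0 (S j) \<partial>PS))"
    using intg by (simp add: integral_sum integrable_sum)
  also have "\<dots> = (\<Sum>a\<in>I'. \<Sum>i\<in>I. \<Sum>j\<in>I. if i = j then (\<integral>x. A x \<partial>D) * ((\<integral>x. (W x)\<^sup>2 \<partial>D) - \<mu>\<^sup>2) else 0)"
    using aij by simp
  also have "\<dots> = m * (m * ((\<integral>x. A x \<partial>D) * ((\<integral>x. (W x)\<^sup>2 \<partial>D) - \<mu>\<^sup>2)))" using fin I by simp
  finally show ?thesis using I by (simp add: power3_eq_cube)
qed

end

definition Yc :: "(nat \<Rightarrow> 'v::real_inner) \<Rightarrow> nat \<Rightarrow> 'v \<times> 'v \<Rightarrow> real" where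
  "Yc e k z = min 1 ((e k \<bullet> snd z)\<^sup>2)"
definition Zf :: "(nat \<Rightarrow> 'v::real_inner) \<Rightarrow> nat \<Rightarrow> 'v \<times> 'v \<Rightarrow> real" where
  "Zf e k z = 2 * (av e k \<bullet> fst z) * (e k \<bullet> snd z) - (av e k \<bullet> fst z)\<^sup>2"
definition Zc :: "(nat \<Rightarrow> 'v::real_inner) \<Rightarrow> nat \<Rightarrow> 'v \<times> 'v \<Rightarrow> real" where
  "Zc e k z = max (-3) (min 3 (Zf e k z))"

definition mh :: "(nat \<Rightarrow> 'v::real_inner) \<Rightarrow> nat \<Rightarrow> nat \<Rightarrow> (nat \<Rightarrow> 'v \<times> 'v) \<Rightarrow> real" where
  "mh e m k S = (\<Sum>i<m. Yc e k (S i)) / m"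
definition gh :: "(nat \<Rightarrow> 'v::real_inner) \<Rightarrow> nat \<Rightarrow> nat \<Rightarrow> (nat \<Rightarrow> 'v \<times> 'v) \<Rightarrow> real" where
  "gh e m k S = (\<Sum>i\<in>{m..<2*m}. Zc e k (S i)) / m"
definition cand :: "(nat \<Rightarrow> 'v::real_inner) \<Rightarrow> nat \<Rightarrow> real \<Rightarrow> nat \<Rightarrow> (nat \<Rightarrow> 'v \<times> 'v) \<Rightarrow> bool" where
  "cand e m \<tau> k S \<longleftrightarrow> 1 \<le> k \<and> \<tau> \<le> mh e m k S"
definition G0 :: "(nat \<Rightarrow> 'v::real_inner) \<Rightarrow> nat \<Rightarrow> nat \<Rightarrow> (nat \<Rightarrow> 'v \<times> 'v) \<Rightarrow> real" where
  "G0 e m k S = (if k = 0 then 0 else gh e m k S)"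
definition khat :: "(nat \<Rightarrow> 'v::real_inner) \<Rightarrow> nat \<Rightarrow> real \<Rightarrow> (nat \<Rightarrow> 'v \<times> 'v) \<Rightarrow> nat" where
  "khat e m \<tau> S = (LEAST k. (k = 0 \<or> cand e m \<tau> k S) \<and> 0 \<le> G0 e m k S
                        \<and> (\<forall>j. cand e m \<tau> j S \<longrightarrow> gh e m j S \<le> G0 e m k S))"
definition hr :: "(nat \<Rightarrow> 'v::real_inner) \<Rightarrow> nat \<Rightarrow> real \<Rightarrow> (nat \<Rightarrow> 'v \<times> 'v) \<Rightarrow> 'v \<Rightarrow> 'v" where
  "hr e m \<tau> S x = (if khat e m \<tau> S = 0 then 0 else fk e (khat e m \<tau> S) x)"

lemma Yc_01: "0 \<le> Yc e k z" "Yc e k z \<le> 1"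
  unfolding Yc_def by (simp_all add: min_def)

lemma Zc_bound: "\<bar>Zc e k z\<bar> \<le> 3"
  unfolding Zc_def abs_le_iff by (simp add: min_def max_def)

lemma mh_01: "0 \<le> mh e m k S" "mh e m k S \<le> 1"
proof -
  show "0 \<le> mh e m k S" unfolding mh_def by (intro divide_nonneg_nonneg sum_nonneg) (auto simp: Yc_01)
  have "(\<Sum>i<m. Yc e k (S i)) \<le> (\<Sum>i<m. 1)" by (intro sum_mono) (auto simp: Yc_01)
  then show "mh e m k S \<le> 1" unfolding mh_def
    by (cases "m = 0") (simp_all add: divide_le_eq_1)
qed

lemma gh_bound: "\<bar>gh e m k S\<bar> \<le> 3"
proof (cases "m = 0")
  case False
  have "\<bar>\<Sum>i\<in>{m..<2*m}. Zc e k (S i)\<bar> \<le> (\<Sum>i\<in>{m..<2*m}. \<bar>Zc e k (S i)\<bar>)" by (rule sum_abs)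
  also have "\<dots> \<le> (\<Sum>i\<in>{m..<2*m}. 3)" by (intro sum_mono) (auto simp: Zc_bound)
  finally have "\<bar>\<Sum>i\<in>{m..<2*m}. Zc e k (S i)\<bar> \<le> 3 * m" by simp
  then have "\<bar>\<Sum>i\<in>{m..<2*m}. Zc e k (S i)\<bar> / m \<le> 3"
    using False by (simp add: divide_le_eq mult.commute)
  then show ?thesis unfolding gh_def by simp
qed (simp add: gh_def)

context ONB begin

lemma Yc_le: "1 \<le> k \<Longrightarrow> Yc e k z \<le> (e k \<bullet> snd z)\<^sup>2"
  unfolding Yc_def by simp

lemma sum_Yc: "finite F \<Longrightarrow> F \<subseteq> {1..} \<Longrightarrow> (\<Sum>k\<in>F. Yc e k z) \<le> (norm (snd z))\<^sup>2"
  using bessel[of F "snd z"] sum_mono[of F "\<lambda>k. Yc e k z" "\<lambda>k. (e k \<bullet> snd z)\<^sup>2"] Yc_le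
  by fastforce

lemma sum_mh: "finite F \<Longrightarrow> F \<subseteq> {1..} \<Longrightarrow> (\<Sum>k\<in>F. mh e m k S) \<le> (\<Sum>i<m. (norm (snd (S i)))\<^sup>2) / m"
proof -
  assume F: "finite F" "F \<subseteq> {1..}"
  have "(\<Sum>k\<in>F. mh e m k S) = (\<Sum>i<m. \<Sum>k\<in>F. Yc e k (S i)) / m"
    unfolding mh_def by (simp add: sum_divide_distrib[symmetric] sum.swap[of _ F])
  also have "\<dots> \<le> (\<Sum>i<m. (norm (snd (S i)))\<^sup>2) / m"
    by (intro divide_right_mono sum_mono sum_Yc F) auto
  finally show ?thesis .
qed

lemma cand_finite:
  assumes "0 < \<tau>"
  shows "finite {k. cand e m \<tau> k S}"
proof -
  define C where "C = (\<Sum>i<m. (norm (snd (S i)))\<^sup>2) / m"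
  have "card G \<le> nat \<lceil>C / \<tau>\<rceil>" if G: "G \<subseteq> {k. cand e m \<tau> k S}" "finite G" for G
  proof -
    have "real (card G) * \<tau> = (\<Sum>k\<in>G. \<tau>)" by simp
    also have "\<dots> \<le> (\<Sum>k\<in>G. mh e m k S)" using G by (intro sum_mono) (auto simp: cand_def)
    also have "\<dots> \<le> C" unfolding C_def using G by (intro sum_mh) (auto simp: cand_def)
    finally have "real (card G) \<le> C / \<tau>" using assms by (simp add: le_divide_eq)
    then show ?thesis by linarith
  qed
  then show ?thesis using finite_if_finite_subsets_card_bdd by blast
qed

lemma khat_prop:
  fixes m :: nat and S :: "nat \<Rightarrow> 'v \<times> 'v"
  assumes "0 < \<tau>"
  defines "k \<equiv> khat e m \<tau> S"
  shows "k = 0 \<or> cand e m \<tau> k S" "0 \<le> G0 e m k S" "\<And>j. cand e m \<tau> j S \<Longrightarrow> gh e m j S \<le> G0 e m k S"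
proof -
  define K where "K = insert 0 {k. cand e m \<tau> k S}"
  have K: "finite K" "K \<noteq> {}" unfolding K_def using cand_finite[OF assms(1)] by auto
  have "Max ((\<lambda>j. G0 e m j S) ` K) \<in> (\<lambda>j. G0 e m j S) ` K"
    using K by (intro Max_in) auto
  then obtain k0 where k0: "k0 \<in> K" "G0 e m k0 S = Max ((\<lambda>j. G0 e m j S) ` K)"
    by (metis (no_types, lifting) imageE)
  have mx: "G0 e m j S \<le> G0 e m k0 S" if "j \<in> K" for j
    using k0 K that by simp
  have P: "(k0 = 0 \<or> cand e m \<tau> k0 S) \<and> 0 \<le> G0 e m k0 S
                        \<and> (\<forall>j. cand e m \<tau> j S \<longrightarrow> gh e m j S \<le> G0 e m k0 S)"
  proof (intro conjI allI impI)
    show "k0 = 0 \<or> cand e m \<tau> k0 S" using k0 unfolding K_def by auto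
    show "0 \<le> G0 e m k0 S" using mx[of 0] unfolding K_def by (simp add: G0_def)
    fix j assume "cand e m \<tau> j S"
    then show "gh e m j S \<le> G0 e m k0 S" using mx[of j] unfolding K_def by (auto simp: G0_def cand_def)
  qed
  have "(k = 0 \<or> cand e m \<tau> k S) \<and> 0 \<le> G0 e m k S
                        \<and> (\<forall>j. cand e m \<tau> j S \<longrightarrow> gh e m j S \<le> G0 e m k S)"
    unfolding k_def khat_def by (rule LeastI[of _ k0]) (rule P)
  then show "k = 0 \<or> cand e m \<tau> k S" "0 \<le> G0 e m k S" "\<And>j. cand e m \<tau> j S \<Longrightarrow> gh e m j S \<le> G0 e m k S"
    by auto
qed

end

lemma Yc_meas[measurable]: "Yc e k \<in> borel_measurable borel"
  unfolding Yc_def by (intro borel_measurable_continuous_onI continuous_intros)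
lemma Zc_meas[measurable]: "Zc e k \<in> borel_measurable borel"
  unfolding Zc_def Zf_def by (intro borel_measurable_continuous_onI continuous_intros)

lemma comp_meas: "f \<in> borel_measurable borel \<Longrightarrow> i \<in> I \<Longrightarrow> (\<lambda>S. f (S i)) \<in> borel_measurable (PiM I (\<lambda>_. borel))"
  by (rule measurable_compose[OF measurable_component_singleton])

lemma mh_meas: "m \<le> n \<Longrightarrow> mh e m k \<in> borel_measurable (PiM {..<n} (\<lambda>_. borel))"
  unfolding mh_def[abs_def]
  by (intro borel_measurable_divide borel_measurable_sum borel_measurable_const
        comp_meas Yc_meas) auto
lemma gh_meas: "2 * m \<le> n \<Longrightarrow> gh e m k \<in> borel_measurable (PiM {..<n} (\<lambda>_. borel))"
  unfolding gh_def[abs_def]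
  by (intro borel_measurable_divide borel_measurable_sum borel_measurable_const
        comp_meas Zc_meas) auto

lemma pred_le_real: "f \<in> borel_measurable M \<Longrightarrow> g \<in> borel_measurable M \<Longrightarrow> Measurable.pred M (\<lambda>x. (f x::real) \<le> g x)"
  unfolding pred_def using borel_measurable_le by blast

lemma khat_meas:
  assumes "2 * m \<le> n"
  shows "khat e m \<tau> \<in> measurable (PiM {..<n} (\<lambda>_. borel)) (count_space UNIV)"
proof -
  have m: "m \<le> n" using assms by simp
  have M: "\<And>k. mh e m k \<in> borel_measurable (PiM {..<n} (\<lambda>_. borel))"
     "\<And>k. gh e m k \<in> borel_measurable (PiM {..<n} (\<lambda>_. borel))"
    using mh_meas[OF m] gh_meas[OF assms] by auto
  have G: "G0 e m k \<in> borel_measurable (PiM {..<n} (\<lambda>_. borel))" for k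
    by (cases "k = 0") (simp_all add: G0_def[abs_def] M)
  have "Measurable.pred (PiM {..<n} (\<lambda>_. borel)) (\<lambda>S. (k = 0 \<or> (1 \<le> k \<and> \<tau> \<le> mh e m k S)) \<and> 0 \<le> G0 e m k S
                        \<and> (\<forall>j. (1 \<le> j \<and> \<tau> \<le> mh e m j S) \<longrightarrow> gh e m j S \<le> G0 e m k S))" for k
    by (intro pred_intros_logic(3,4,5) pred_intros_countable(1) pred_le_real measurable_const M G borel_measurable_const) simp_all
  then show ?thesis unfolding khat_def cand_def by (rule measurable_Least)
qed

locale LR = ONB e + iid D n
  for e :: "nat \<Rightarrow> 'v::{real_inner, complete_space, second_countable_topology}"
  and D :: "('v \<times> 'v) measure" and n :: nat +
  assumes sD: "sets D = sets borel"
    and AEXY: "AE z in D. z \<in> Xset e \<times> Yset"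
begin

lemma measD: "f \<in> borel_measurable borel \<Longrightarrow> f \<in> borel_measurable D"
  using measurable_cong_sets[OF sD refl] by blast

lemma Yc_measD: "Yc e k \<in> borel_measurable D" and Zc_measD: "Zc e k \<in> borel_measurable D"
  by (auto intro: measD)

definition g :: "nat \<Rightarrow> real" where "g k = (\<integral>z. Zc e k z \<partial>D)"
definition mu :: "nat \<Rightarrow> real" where "mu k = (\<integral>z. Yc e k z \<partial>D)"
definition R0 :: real where "R0 = (\<integral>z. (norm (snd z))\<^sup>2 \<partial>D)"

lemma XY_facts:
  assumes "z \<in> Xset e \<times> Yset" "1 \<le> k"
  shows "Yc e k z = (e k \<bullet> snd z)\<^sup>2" "Zc e k z = Zf e k z" "Zf e k z \<le> Yc e k z"
    "(norm (snd z))\<^sup>2 \<le> 1"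
proof -
  obtain x y where z: "z = (x, y)" "x \<in> Xset e" "y \<in> Yset" using assms(1) by auto
  have ny: "norm y \<le> 1" using z unfolding Yset_def by auto
  have ny2: "(norm y)\<^sup>2 \<le> 1" using ny by (simp add: power_le_one)
  have ay: "(e k \<bullet> y)\<^sup>2 \<le> 1"
    using coord_sq_le[OF assms(2), of y] ny2 by linarith
  then have ay': "\<bar>e k \<bullet> y\<bar> \<le> 1" by (simp add: abs_square_le_1)
  have ax: "\<bar>av e k \<bullet> x\<bar> \<le> 1" using av_inner_X z by auto
  show "Yc e k z = (e k \<bullet> snd z)\<^sup>2" using ay z by (simp add: Yc_def)
  have "\<bar>Zf e k z\<bar> \<le> 3"
  proof -
    have "\<bar>Zf e k z\<bar> \<le> 2 * \<bar>av e k \<bullet> x\<bar> * \<bar>e k \<bullet> y\<bar> + (av e k \<bullet> x)\<^sup>2"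
      unfolding Zf_def z using abs_triangle_ineq4[of "2 * (av e k \<bullet> x) * (e k \<bullet> y)" "(av e k \<bullet> x)\<^sup>2"]
      by (simp add: abs_mult)
    also have "\<dots> \<le> 2 * 1 * 1 + 1"
      using ax ay' by (intro add_mono mult_mono) (auto simp: abs_square_le_1)
    finally show ?thesis by simp
  qed
  then show "Zc e k z = Zf e k z" unfolding Zc_def by (simp add: abs_le_iff)
  have "Zf e k z \<le> (e k \<bullet> y)\<^sup>2"
  proof -
    have "0 \<le> (e k \<bullet> y - av e k \<bullet> x)\<^sup>2" by simp
    then show ?thesis unfolding Zf_def z by (simp add: power2_eq_square algebra_simps)
  qed
  then show "Zf e k z \<le> Yc e k z" using ay z by (simp add: Yc_def)
  show "(norm (snd z))\<^sup>2 \<le> 1" using ny2 z by simp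
qed

lemma mu_01: "0 \<le> mu k" "mu k \<le> 1"
proof -
  show "0 \<le> mu k" unfolding mu_def using Yc_01 by (intro Bochner_Integration.integral_nonneg) auto
  have "mu k \<le> (\<integral>z. 1 \<partial>D)" unfolding mu_def
    by (intro integral_mono integrable_D_bound[of _ 1] Yc_measD) (auto simp: Yc_01)
  then show "mu k \<le> 1" by (simp add: prob_space)
qed

lemma g_bound: "\<bar>g k\<bar> \<le> 3"
proof -
  have "\<bar>g k\<bar> \<le> (\<integral>z. \<bar>Zc e k z\<bar> \<partial>D)" unfolding g_def by (rule integral_abs_bound)
  also have "\<dots> \<le> (\<integral>z. 3 \<partial>D)"
    by (intro integral_mono integrable_D_bound[of _ 3]) (auto simp: Zc_bound Zc_measD intro: borel_measurable_abs)
  finally show ?thesis by (simp add: prob_space)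
qed

lemma g_le_mu: assumes "1 \<le> k" shows "g k \<le> mu k"
  unfolding g_def mu_def
proof (rule integral_mono_AE)
  show "integrable D (Zc e k)" by (intro integrable_D_bound[of _ 3] Zc_measD) (simp add: Zc_bound)
  show "integrable D (Yc e k)" by (intro integrable_D_bound[of _ 1] Yc_measD) (simp add: Yc_01)
  show "AE z in D. Zc e k z \<le> Yc e k z"
    using AEXY
  proof eventually_elim
    case (elim z)
    then show ?case using XY_facts[OF elim assms] by simp
  qed
qed

lemma sum_mu: "finite F \<Longrightarrow> F \<subseteq> {1..} \<Longrightarrow> (\<Sum>k\<in>F. mu k) \<le> 1"
proof -
  assume F: "finite F" "F \<subseteq> {1..}"
  have "(\<Sum>k\<in>F. mu k) = (\<integral>z. (\<Sum>k\<in>F. Yc e k z) \<partial>D)" unfolding mu_def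
    by (subst Bochner_Integration.integral_sum) (auto intro!: integrable_D_bound[of _ 1] Yc_measD simp: Yc_01)
  also have "\<dots> \<le> (\<integral>z. 1 \<partial>D)"
  proof (rule integral_mono_AE)
    show "integrable D (\<lambda>z. \<Sum>k\<in>F. Yc e k z)"
      by (rule Bochner_Integration.integrable_sum) (auto intro!: integrable_D_bound[of _ 1] Yc_measD simp: Yc_01)
    show "AE z in D. (\<Sum>k\<in>F. Yc e k z) \<le> 1"
      using AEXY
    proof eventually_elim
      case (elim z)
      then show ?case using sum_Yc[OF F, of z] XY_facts(4)[OF elim, of 1] by simp
    qed
  qed simp
  finally show ?thesis by (simp add: prob_space)
qed

lemma risk0: "risk D (\<lambda>_. 0) = R0"
  unfolding risk_def R0_def by simp

lemma riskk: assumes "1 \<le> k" shows "risk D (fk e k) = R0 - g k"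
proof -
  have m1: "(\<lambda>z. (norm (snd z))\<^sup>2) \<in> borel_measurable D"
    by (intro measD borel_measurable_continuous_onI continuous_intros)
  have i1: "integrable D (\<lambda>z. (norm (snd z))\<^sup>2)"
  proof (rule integrable_const_bound[of _ 1])
    show "AE z in D. norm ((norm (snd z))\<^sup>2) \<le> 1"
      using AEXY
    proof eventually_elim
      case (elim z)
      then show ?case using XY_facts(4)[OF elim assms] by simp
    qed
  qed (rule m1)
  have i2: "integrable D (Zc e k)" by (intro integrable_D_bound[of _ 3] Zc_measD) (simp add: Zc_bound)
  have "risk D (fk e k) = (\<integral>z. (norm (snd z))\<^sup>2 - Zc e k z \<partial>D)"
    unfolding risk_def
  proof (rule integral_cong_AE)
    show "(\<lambda>z. (norm (fk e k (fst z) - snd z))\<^sup>2) \<in> borel_measurable D"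
      unfolding fk_eq by (intro measD borel_measurable_continuous_onI continuous_intros)
    show "(\<lambda>z. (norm (snd z))\<^sup>2 - Zc e k z) \<in> borel_measurable D"
      using m1 Zc_measD by measurable
    show "AE z in D. (norm (fk e k (fst z) - snd z))\<^sup>2 = (norm (snd z))\<^sup>2 - Zc e k z"
      using AEXY
    proof eventually_elim
      case (elim z)
      have "(norm (fk e k (fst z) - snd z))\<^sup>2 = (norm (snd z))\<^sup>2 - Zf e k z"
        unfolding loss_eq[OF assms] Zf_def by simp
      then show ?case using XY_facts(2)[OF elim assms] by simp
    qed
  qed
  also have "\<dots> = R0 - g k" unfolding R0_def g_def using i1 i2 by simp
  finally show ?thesis .
qed

end

lemma Zc_le3: "Zc e k z \<le> 3" "- Zc e k z \<le> 3" and Yc_le3: "Yc e k z \<le> 3"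
  using Zc_bound[of e k z] Yc_01(2)[of e k z] by auto

context LR begin

lemma Yc2_measD: "(\<lambda>x. (Yc e k x)\<^sup>2) \<in> borel_measurable D"
  unfolding power2_eq_square by (intro borel_measurable_times Yc_measD)
lemma Zc2_measD: "(\<lambda>x. (Zc e k x)\<^sup>2) \<in> borel_measurable D"
  unfolding power2_eq_square by (intro borel_measurable_times Zc_measD)

lemma sets_PS: "sets PS = sets (PiM {..<n} (\<lambda>_. borel))"
  by (rule sets_PiM_cong) (auto simp: sD)

lemma measPS: "f \<in> borel_measurable (PiM {..<n} (\<lambda>_. borel)) \<Longrightarrow> f \<in> borel_measurable PS"
  using measurable_cong_sets[OF sets_PS refl] by blast

lemma khat_PS: "2 * m \<le> n \<Longrightarrow> khat e m \<tau> \<in> measurable PS (count_space UNIV)"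
  using measurable_cong_sets[OF sets_PS refl] khat_meas by blast

lemma mh_PS: "2 * m \<le> n \<Longrightarrow> mh e m k \<in> borel_measurable PS"
  by (intro measPS mh_meas) simp
lemma gh_PS: "2 * m \<le> n \<Longrightarrow> gh e m k \<in> borel_measurable PS"
  by (intro measPS gh_meas)

lemma var_mh:
  assumes "0 < m" "2 * m \<le> n"
  shows "(\<integral>S. (mh e m k S - mu k)\<^sup>2 \<partial>PS) \<le> mu k / m"
proof -
  have "(\<integral>S. (mh e m k S - mu k)\<^sup>2 \<partial>PS) = ((\<integral>x. (Yc e k x)\<^sup>2 \<partial>D) - (mu k)\<^sup>2) / m"
    unfolding mh_def mu_def
    by (rule variance_mean[of _ 1]) (use assms in \<open>auto simp: Yc_measD abs_le_iff Yc_01 intro: order_trans[OF _ Yc_01(2)]\<close>)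
  also have "\<dots> \<le> (\<integral>x. (Yc e k x)\<^sup>2 \<partial>D) / m"
    using assms by (intro divide_right_mono) auto
  also have "(\<integral>x. (Yc e k x)\<^sup>2 \<partial>D) \<le> mu k" unfolding mu_def
  proof (rule integral_mono)
    show "integrable D (\<lambda>x. (Yc e k x)\<^sup>2)"
      by (intro integrable_D_bound[of _ 1]) (auto simp: Yc2_measD abs_le_iff Yc_01 power_le_one)
    show "integrable D (Yc e k)" by (intro integrable_D_bound[of _ 1] Yc_measD) (simp add: Yc_01)
    fix x show "(Yc e k x)\<^sup>2 \<le> Yc e k x"
      using Yc_01[of e k x] by (simp add: power2_eq_square mult_left_le_one_le)
  qed
  then have "(\<integral>x. (Yc e k x)\<^sup>2 \<partial>D) / m \<le> mu k / m"
    by (intro divide_right_mono) auto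
  finally show ?thesis .
qed

lemma cross_bound:
  assumes "0 < m" "2 * m \<le> n"
  shows "(\<integral>S. mh e m k S * (gh e m k S - g k)\<^sup>2 \<partial>PS) \<le> 9 * mu k / m"
proof -
  have "(\<integral>S. mh e m k S * (gh e m k S - g k)\<^sup>2 \<partial>PS)
     = (\<integral>x. Yc e k x \<partial>D) * ((\<integral>x. (Zc e k x)\<^sup>2 \<partial>D) - (g k)\<^sup>2) / m"
    unfolding mh_def gh_def g_def
    by (rule cross_mean[of _ 3]) (use assms in \<open>auto simp: Yc_measD Zc_measD Zc_le3 Yc_le3 abs_le_iff Yc_01\<close>)
  also have "\<dots> \<le> mu k * 9 / m"
  proof -
    have "(\<integral>x. (Zc e k x)\<^sup>2 \<partial>D) \<le> (\<integral>x. 9 \<partial>D)"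
    proof (rule integral_mono)
      show "integrable D (\<lambda>x. (Zc e k x)\<^sup>2)"
        by (intro integrable_D_bound[of _ 9]) (use sq_le_bound[OF Zc_bound] Zc2_measD in \<open>auto simp: power2_eq_square\<close>)
      fix x show "(Zc e k x)\<^sup>2 \<le> 9"
        using sq_le_bound[OF Zc_bound[of e k x]] by (simp add: power2_eq_square)
    qed simp
    then have A: "(\<integral>x. (Zc e k x)\<^sup>2 \<partial>D) \<le> 9" using prob_space by simp
    have "(\<integral>x. (Zc e k x)\<^sup>2 \<partial>D) - (g k)\<^sup>2 \<le> 9"
      using A zero_le_power2[of "g k"] by linarith
    then show ?thesis using assms mu_01[of k] unfolding mu_def
      by (intro divide_right_mono mult_left_mono) auto
  qed
  finally show ?thesis by (simp only: mult.commute)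
qed

end

context LR begin

definition tm :: "nat \<Rightarrow> nat \<Rightarrow> (nat \<Rightarrow> 'v \<times> 'v) \<Rightarrow> real" where
  "tm m j S = mh e m (Suc j) S * (gh e m (Suc j) S - g (Suc j))\<^sup>2"
definition Phi :: "nat \<Rightarrow> (nat \<Rightarrow> 'v \<times> 'v) \<Rightarrow> real" where
  "Phi m S = (\<Sum>j. tm m j S)"

lemma tm_nonneg: "0 \<le> tm m j S"
  unfolding tm_def by (intro mult_nonneg_nonneg mh_01(1) zero_le_power2)

lemma dev_sq: "(gh e m k S - g k)\<^sup>2 \<le> 36"
proof -
  have "\<bar>gh e m k S - g k\<bar> \<le> 6" using gh_bound[of e m k S] g_bound[of k] by linarith
  from sq_le_bound[OF this] show ?thesis by (simp add: power2_eq_square)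
qed

lemma tm_le: "tm m j S \<le> 36 * mh e m (Suc j) S"
  unfolding tm_def using dev_sq[of m "Suc j" S] mh_01(1)[of e m "Suc j" S]
  by (simp add: mult.commute mult_left_mono)

lemma tm_le36: "tm m j S \<le> 36"
  using tm_le[of m j S] mh_01(2)[of e m "Suc j" S] by linarith

lemma summable_mh: "summable (\<lambda>j. mh e m (Suc j) S)"
proof (rule summableI_nonneg_bounded)
  fix N
  have "(\<Sum>j<N. mh e m (Suc j) S) = (\<Sum>k\<in>Suc ` {..<N}. mh e m k S)"
    by (simp add: sum.reindex)
  also have "\<dots> \<le> (\<Sum>i<m. (norm (snd (S i)))\<^sup>2) / m"
    by (rule sum_mh) auto
  finally show "(\<Sum>j<N. mh e m (Suc j) S) \<le> (\<Sum>i<m. (norm (snd (S i)))\<^sup>2) / m" .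
qed (simp add: mh_01)

lemma summable_tm: "summable (\<lambda>j. tm m j S)"
proof (rule summable_comparison_test'[of "\<lambda>j. 36 * mh e m (Suc j) S" 0])
  show "summable (\<lambda>j. 36 * mh e m (Suc j) S)" by (intro summable_mult summable_mh)
  show "norm (tm m j S) \<le> 36 * mh e m (Suc j) S" for j using tm_le tm_nonneg by simp
qed

lemma tm_le_Phi: "tm m j S \<le> Phi m S"
  unfolding Phi_def using sum_le_suminf[OF summable_tm, of "{j}" m S] tm_nonneg by simp

lemma Phi_nonneg: "0 \<le> Phi m S"
  unfolding Phi_def by (intro suminf_nonneg summable_tm tm_nonneg)

lemma summable_mu: "summable (\<lambda>j. mu (Suc j))" and suminf_mu: "(\<Sum>j. mu (Suc j)) \<le> 1"
proof -
  have p: "(\<Sum>j<N. mu (Suc j)) \<le> 1" for N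
  proof -
    have "(\<Sum>j<N. mu (Suc j)) = (\<Sum>k\<in>Suc ` {..<N}. mu k)" by (simp add: sum.reindex)
    also have "\<dots> \<le> 1" by (rule sum_mu) auto
    finally show ?thesis .
  qed
  show s: "summable (\<lambda>j. mu (Suc j))" by (rule summableI_nonneg_bounded[OF _ p]) (simp add: mu_01)
  show "(\<Sum>j. mu (Suc j)) \<le> 1" by (rule suminf_le_const[OF s p])
qed

lemma tm_PS: "2 * m \<le> n \<Longrightarrow> tm m j \<in> borel_measurable PS"
  unfolding tm_def[abs_def] using mh_PS gh_PS by (simp add: power2_eq_square)

lemma Phi_int:
  assumes "0 < m" "2 * m \<le> n"
  shows "integrable PS (Phi m)" "(\<integral>S. Phi m S \<partial>PS) \<le> 9 / m"
proof -
  have int: "integrable PS (tm m j)" for j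
    by (rule integrable_PS_bound[of _ 36]) (use tm_PS[OF assms(2)] tm_le36 tm_nonneg in auto)
  have ib: "(\<integral>S. tm m j S \<partial>PS) \<le> 9 * mu (Suc j) / m" for j
    unfolding tm_def by (rule cross_bound[OF assms])
  have i0: "0 \<le> (\<integral>S. tm m j S \<partial>PS)" for j by (simp add: tm_nonneg)
  have sm: "summable (\<lambda>j. 9 * mu (Suc j) / m)"
    using summable_mu by (simp add: summable_divide summable_mult)
  have s2: "summable (\<lambda>j. \<integral>S. norm (tm m j S) \<partial>PS)"
  proof (rule summable_comparison_test'[OF sm, of 0])
    fix j
    show "norm (\<integral>S. norm (tm m j S) \<partial>PS) \<le> 9 * mu (Suc j) / m"
      using ib[of j] i0[of j] tm_nonneg by simp
  qed
  have ae: "AE S in PS. summable (\<lambda>j. norm (tm m j S))"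
    using summable_tm tm_nonneg by simp
  show "integrable PS (Phi m)"
    unfolding Phi_def[abs_def] by (rule integrable_suminf[OF int ae s2])
  have "(\<integral>S. Phi m S \<partial>PS) = (\<Sum>j. \<integral>S. tm m j S \<partial>PS)"
    unfolding Phi_def by (rule integral_suminf[OF int ae s2])
  also have "\<dots> \<le> (\<Sum>j. 9 * mu (Suc j) / m)"
  proof (rule suminf_le[OF ib _ sm])
    show "summable (\<lambda>j. \<integral>S. tm m j S \<partial>PS)" by (rule summable_integral[OF int ae s2])
  qed
  also have "\<dots> = 9 / m * (\<Sum>j. mu (Suc j))"
  proof -
    have "(\<lambda>j. 9 * mu (Suc j) / m) = (\<lambda>j. (9 / m) * mu (Suc j))" by auto
    then show ?thesis using suminf_mult[OF summable_mu, of "9 / m"] by simp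
  qed
  also have "\<dots> \<le> 9 / m * 1"
    by (intro mult_left_mono suminf_mu) auto
  finally show "(\<integral>S. Phi m S \<partial>PS) \<le> 9 / m" by simp
qed

end

context LR begin

definition gs :: "nat \<Rightarrow> real" where "gs k = (if k = 0 then 0 else g k)"
definition Dv :: "nat \<Rightarrow> real \<Rightarrow> (nat \<Rightarrow> 'v \<times> 'v) \<Rightarrow> real" where
  "Dv m \<tau> S = sqrt (Phi m S / \<tau>)"

lemma Dv_nonneg: "0 < \<tau> \<Longrightarrow> 0 \<le> Dv m \<tau> S"
  unfolding Dv_def using Phi_nonneg by simp

lemma cand_dev:
  assumes "0 < \<tau>" "cand e m \<tau> k S"
  shows "\<bar>gh e m k S - g k\<bar> \<le> Dv m \<tau> S"
proof -
  obtain j where k: "k = Suc j" using assms(2) unfolding cand_def by (cases k) auto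
  have "\<tau> * (gh e m k S - g k)\<^sup>2 \<le> mh e m k S * (gh e m k S - g k)\<^sup>2"
    using assms(2) unfolding cand_def by (intro mult_right_mono) auto
  also have "\<dots> = tm m j S" unfolding tm_def k by simp
  also have "\<dots> \<le> Phi m S" by (rule tm_le_Phi)
  finally have "(gh e m k S - g k)\<^sup>2 \<le> Phi m S / \<tau>"
    using assms(1) by (simp add: le_divide_eq mult.commute)
  then have "sqrt ((gh e m k S - g k)\<^sup>2) \<le> sqrt (Phi m S / \<tau>)" by (rule real_sqrt_le_mono)
  then show ?thesis unfolding Dv_def by simp
qed

lemma pointwise:
  assumes "0 < \<tau>" "ks = 0 \<or> 1 \<le> ks"
  shows "gs ks - gs (khat e m \<tau> S) \<le> 2 * Dv m \<tau> S + (if 1 \<le> ks \<and> mh e m ks S < \<tau> then max 0 (g ks) else 0)"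
proof -
  define kh where "kh = khat e m \<tau> S"
  have kp: "kh = 0 \<or> cand e m \<tau> kh S" "0 \<le> G0 e m kh S" "\<And>j. cand e m \<tau> j S \<Longrightarrow> gh e m j S \<le> G0 e m kh S"
    using khat_prop[OF assms(1), where m=m and S=S] unfolding kh_def by auto
  have D0: "0 \<le> Dv m \<tau> S" by (rule Dv_nonneg[OF assms(1)])
  have low: "G0 e m kh S - Dv m \<tau> S \<le> gs kh"
  proof (cases "kh = 0")
    case True then show ?thesis using D0 by (simp add: G0_def gs_def)
  next
    case False
    then have "cand e m \<tau> kh S" using kp(1) by simp
    from cand_dev[OF assms(1) this] False show ?thesis by (simp add: G0_def gs_def abs_le_iff)
  qed
  show ?thesis
  proof (cases "ks = 0")
    case True
    then show ?thesis using low kp(2) D0 unfolding kh_def[symmetric] by (simp add: gs_def)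
  next
    case False
    then have ks1: "1 \<le> ks" using assms(2) by simp
    show ?thesis
    proof (cases "mh e m ks S < \<tau>")
      case True
      then show ?thesis using low kp(2) D0 ks1 False unfolding kh_def[symmetric] by (simp add: gs_def)
    next
      case nt: False
      then have c: "cand e m \<tau> ks S" using ks1 unfolding cand_def by simp
      have "g ks \<le> gh e m ks S + Dv m \<tau> S" using cand_dev[OF assms(1) c] by (simp add: abs_le_iff)
      also have "\<dots> \<le> G0 e m kh S + Dv m \<tau> S" using kp(3)[OF c] by simp
      finally show ?thesis using low nt False unfolding kh_def[symmetric] by (simp add: gs_def)
    qed
  qed
qed

lemma ind_bound:
  fixes ks :: nat
  assumes m: "0 < m" "2 * m \<le> n" and \<tau>: "0 < \<tau>"
  defines "f \<equiv> (\<lambda>S. if 1 \<le> ks \<and> mh e m ks S < \<tau> then max 0 (g ks) else 0)"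
  shows "integrable PS f" "(\<integral>S. f S \<partial>PS) \<le> 2 * \<tau> + 4 / m"
proof -
  interpret P: prob_space PS by (rule prob_PS)
  have fm: "f \<in> borel_measurable PS" unfolding f_def
  proof (rule measurable_If)
    have "Measurable.pred PS (\<lambda>S. \<not> (\<tau> \<le> mh e m ks S))"
      by (intro pred_intros_logic pred_le_real borel_measurable_const mh_PS[OF m(2)])
    then show "{S \<in> space PS. 1 \<le> ks \<and> mh e m ks S < \<tau>} \<in> sets PS"
      by (cases "1 \<le> ks") (simp_all add: not_le pred_def)
  qed auto
  have fb: "\<bar>f S\<bar> \<le> 3" for S unfolding f_def using g_bound[of ks] by auto
  show fi: "integrable PS f" by (rule integrable_PS_bound[OF fm fb])
  show "(\<integral>S. f S \<partial>PS) \<le> 2 * \<tau> + 4 / m"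
  proof (cases "1 \<le> ks")
    case False
    then show ?thesis unfolding f_def using \<tau> by simp
  next
    case ks: True
    define \<mu> where "\<mu> = mu ks"
    define G where "G = max 0 (g ks)"
    have G\<mu>: "G \<le> \<mu>" "0 \<le> G" unfolding G_def \<mu>_def using g_le_mu[OF ks] mu_01[of ks] by auto
    show ?thesis
    proof (cases "\<mu> \<le> 2 * \<tau>")
      case True
      have "(\<integral>S. f S \<partial>PS) \<le> (\<integral>S. 2 * \<tau> \<partial>PS)"
        by (rule integral_mono[OF fi]) (use G\<mu> True in \<open>auto simp: f_def G_def\<close>)
      then have "(\<integral>S. f S \<partial>PS) \<le> 2 * \<tau>" by (simp add: P.prob_space)
      moreover have "0 \<le> 4 / real m" by simp
      ultimately show ?thesis by linarith
    next
      case False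
      then have pos: "0 < \<mu> - \<tau>" "\<mu> / 2 \<le> \<mu> - \<tau>" using \<tau> by auto
      have ab: "\<bar>(mh e m ks S - \<mu>)\<^sup>2\<bar> \<le> 1" for S
      proof -
        have "\<bar>mh e m ks S - \<mu>\<bar> \<le> 1" using mh_01[of e m ks S] mu_01[of ks] unfolding \<mu>_def
          by (simp add: abs_le_iff)
        from sq_le_bound[OF this] show ?thesis by (simp add: power2_eq_square)
      qed
      have vm: "integrable PS (\<lambda>S. (mh e m ks S - \<mu>)\<^sup>2)"
        by (rule integrable_PS_bound[OF _ ab]) (use mh_PS[OF m(2)] in \<open>simp add: power2_eq_square\<close>)
      have pt: "f S \<le> G / (\<mu> - \<tau>)\<^sup>2 * (mh e m ks S - \<mu>)\<^sup>2" for S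
      proof (cases "mh e m ks S < \<tau>")
        case True
        then have "\<mu> - \<tau> \<le> \<mu> - mh e m ks S" by simp
        then have "(\<mu> - \<tau>)\<^sup>2 \<le> (mh e m ks S - \<mu>)\<^sup>2"
          using pos by (simp add: power_mono power2_commute)
        then have "1 \<le> (mh e m ks S - \<mu>)\<^sup>2 / (\<mu> - \<tau>)\<^sup>2" using pos by simp
        then have "G * 1 \<le> G * ((mh e m ks S - \<mu>)\<^sup>2 / (\<mu> - \<tau>)\<^sup>2)"
          using G\<mu> by (intro mult_left_mono) auto
        then show ?thesis using True ks unfolding f_def G_def by simp
      next
        case False
        then show ?thesis unfolding f_def using G\<mu> by simp
      qed
      have "(\<integral>S. f S \<partial>PS) \<le> (\<integral>S. G / (\<mu> - \<tau>)\<^sup>2 * (mh e m ks S - \<mu>)\<^sup>2 \<partial>PS)"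
        by (rule integral_mono[OF fi]) (use vm pt in auto)
      also have "\<dots> = G / (\<mu> - \<tau>)\<^sup>2 * (\<integral>S. (mh e m ks S - \<mu>)\<^sup>2 \<partial>PS)" by simp
      also have "\<dots> \<le> G / (\<mu> - \<tau>)\<^sup>2 * (\<mu> / m)"
        using var_mh[OF m, of ks] G\<mu> unfolding \<mu>_def by (intro mult_left_mono) auto
      also have "\<dots> \<le> \<mu> / (\<mu> / 2)\<^sup>2 * (\<mu> / m)"
      proof -
        have "(\<mu> / 2)\<^sup>2 \<le> (\<mu> - \<tau>)\<^sup>2" using pos False \<tau> by (intro power_mono) auto
        then have "G / (\<mu> - \<tau>)\<^sup>2 \<le> \<mu> / (\<mu> / 2)\<^sup>2"
          using G\<mu> pos False \<tau> by (intro frac_le) auto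
        then show ?thesis using G\<mu> m by (intro mult_right_mono) auto
      qed
      also have "\<dots> = 4 / m" using False \<tau> by (simp add: power2_eq_square field_simps)
      finally show ?thesis using \<tau> by simp
    qed
  qed
qed

lemma Dv_int:
  assumes m: "0 < m" "2 * m \<le> n" and \<tau>: "0 < \<tau>" and \<rho>: "0 < \<rho>"
  shows "integrable PS (Dv m \<tau>)" "(\<integral>S. Dv m \<tau> S \<partial>PS) \<le> \<rho> + 9 / (m * \<tau> * \<rho>)"
proof -
  have PI: "integrable PS (Phi m)" "(\<integral>S. Phi m S \<partial>PS) \<le> 9 / m" using Phi_int[OF m] by auto
  have pt: "Dv m \<tau> S \<le> \<rho> + Phi m S / (\<tau> * \<rho>)" for S
  proof -
    define d where "d = Dv m \<tau> S"
    have d0: "0 \<le> d" unfolding d_def by (rule Dv_nonneg[OF \<tau>])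
    have dd: "d\<^sup>2 = Phi m S / \<tau>" unfolding d_def Dv_def using Phi_nonneg \<tau> by simp
    have e1: "0 \<le> (d - \<rho>)\<^sup>2" by simp
    have e2: "(d - \<rho>)\<^sup>2 = d\<^sup>2 - 2 * d * \<rho> + \<rho>\<^sup>2" by (simp add: power2_diff)
    have e3: "0 \<le> \<rho> * d" using d0 \<rho> by simp
    have "\<rho> * d \<le> \<rho>\<^sup>2 + d\<^sup>2" using e1 e2 e3 by (simp add: algebra_simps)
    then have "d \<le> \<rho> + d\<^sup>2 / \<rho>" using \<rho> by (simp add: field_simps power2_eq_square)
    moreover have "d\<^sup>2 / \<rho> = Phi m S / (\<tau> * \<rho>)" unfolding dd by simp
    ultimately show ?thesis unfolding d_def by linarith
  qed
  have meas: "Dv m \<tau> \<in> borel_measurable PS"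
    unfolding Dv_def[abs_def] using borel_measurable_integrable[OF PI(1)] by measurable
  have ib: "integrable PS (\<lambda>S. \<rho> + Phi m S / (\<tau> * \<rho>))"
    using PI(1) by (intro Bochner_Integration.integrable_add integrable_divide finite_measure.integrable_const
         prob_space.finite_measure prob_PS)
  show iD: "integrable PS (Dv m \<tau>)"
  proof (rule Bochner_Integration.integrable_bound[OF ib meas])
    show "AE S in PS. norm (Dv m \<tau> S) \<le> norm (\<rho> + Phi m S / (\<tau> * \<rho>))"
      using pt Dv_nonneg[OF \<tau>] by (auto intro!: AE_I2 order_trans[OF _ abs_ge_self])
  qed
  interpret P: prob_space PS by (rule prob_PS)
  have "(\<integral>S. Dv m \<tau> S \<partial>PS) \<le> (\<integral>S. \<rho> + Phi m S / (\<tau> * \<rho>) \<partial>PS)"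
    by (rule integral_mono[OF iD ib pt])
  also have "\<dots> = \<rho> + (\<integral>S. Phi m S \<partial>PS) / (\<tau> * \<rho>)"
    using PI(1) by (simp add: P.prob_space)
  also have "\<dots> \<le> \<rho> + (9 / m) / (\<tau> * \<rho>)"
    using PI(2) \<tau> \<rho> by (intro add_left_mono divide_right_mono) auto
  finally show "(\<integral>S. Dv m \<tau> S \<partial>PS) \<le> \<rho> + 9 / (m * \<tau> * \<rho>)" by (simp add: field_simps)
qed

end

context LR begin

lemma risk_nonneg: "0 \<le> risk D f"
  unfolding risk_def by simp

lemma risk_gs: "risk D (if k = 0 then (\<lambda>_. 0) else fk e k) = R0 - gs k"
  by (cases "k = 0") (simp_all add: risk0 riskk gs_def)

lemma hr_eq: "hr e m \<tau> S = (if khat e m \<tau> S = 0 then (\<lambda>_. 0) else fk e (khat e m \<tau> S))"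
  unfolding hr_def by (auto simp: fun_eq_iff)

lemma risk_hr: "risk D (hr e m \<tau> S) = R0 - gs (khat e m \<tau> S)"
  unfolding hr_eq by (rule risk_gs)

lemma excess_bound:
  assumes m: "0 < m" "2 * m \<le> n" and \<tau>: "0 < \<tau>" and \<rho>: "0 < \<rho>"
  shows "(\<integral>S. (risk D (hr e m \<tau> S) - (INF f\<in>Fcl e. risk D f)) \<partial>PS)
           \<le> 2 * (\<rho> + 9 / (m * \<tau> * \<rho>)) + 2 * \<tau> + 4 / m"
proof -
  interpret P: prob_space PS by (rule prob_PS)
  define I where "I = (INF f\<in>Fcl e. risk D f)"
  define Bd where "Bd = 2 * (\<rho> + 9 / (m * \<tau> * \<rho>)) + (2 * \<tau> + 4 / m)"
  have ne: "Fcl e \<noteq> {}" unfolding Fcl_def by simp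
  have bdd: "bdd_below ((\<lambda>f. risk D f) ` Fcl e)" by (rule bdd_belowI2[of _ 0]) (rule risk_nonneg)
  have gsm: "(\<lambda>S. gs (khat e m \<tau> S)) \<in> borel_measurable PS"
    by (rule measurable_compose[OF khat_PS[OF m(2)]]) simp
  have gsb: "\<bar>gs k\<bar> \<le> 3" for k unfolding gs_def using g_bound by auto
  have intI: "integrable PS (\<lambda>S. risk D (hr e m \<tau> S) - I)"
    unfolding risk_hr
  proof (rule integrable_PS_bound[of _ "\<bar>R0\<bar> + 3 + \<bar>I\<bar>"])
    show "(\<lambda>S. R0 - gs (khat e m \<tau> S) - I) \<in> borel_measurable PS" using gsm by simp
    fix S show "\<bar>R0 - gs (khat e m \<tau> S) - I\<bar> \<le> \<bar>R0\<bar> + 3 + \<bar>I\<bar>"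
      using gsb[of "khat e m \<tau> S"] by linarith
  qed
  have "(\<integral>S. (risk D (hr e m \<tau> S) - I) \<partial>PS) \<le> Bd + \<eta>" if \<eta>: "0 < \<eta>" for \<eta>
  proof -
    have "Inf ((\<lambda>f. risk D f) ` Fcl e) < I + \<eta>" unfolding I_def using \<eta> by simp
    then obtain f where f: "f \<in> Fcl e" "risk D f < I + \<eta>"
      using cInf_lessD[of "(\<lambda>f. risk D f) ` Fcl e"] ne by blast
    obtain ks where ks: "ks = 0 \<or> 1 \<le> ks" "risk D f = R0 - gs ks"
    proof (cases "f = (\<lambda>_. 0)")
      case True then show ?thesis using that[of 0] by (simp add: risk0 gs_def)
    next
      case False
      then obtain k where "1 \<le> k" "f = fk e k" using f(1) unfolding Fcl_def by auto
      then show ?thesis using that[of k] by (simp add: riskk gs_def)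
    qed
    define ind where "ind = (\<lambda>S. if 1 \<le> ks \<and> mh e m ks S < \<tau> then max 0 (g ks) else 0)"
    have pt: "risk D (hr e m \<tau> S) - I \<le> 2 * Dv m \<tau> S + ind S + \<eta>" for S
      using pointwise[OF \<tau> ks(1), of m S] f(2) ks(2) unfolding risk_hr ind_def by linarith
    have iD: "integrable PS (Dv m \<tau>)" "(\<integral>S. Dv m \<tau> S \<partial>PS) \<le> \<rho> + 9 / (m * \<tau> * \<rho>)"
      using Dv_int[OF m \<tau> \<rho>] by auto
    have iI: "integrable PS ind" "(\<integral>S. ind S \<partial>PS) \<le> 2 * \<tau> + 4 / m"
      using ind_bound[OF m \<tau>, of ks] unfolding ind_def by auto
    have "(\<integral>S. (risk D (hr e m \<tau> S) - I) \<partial>PS) \<le> (\<integral>S. 2 * Dv m \<tau> S + ind S + \<eta> \<partial>PS)"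
      by (rule integral_mono[OF intI _ pt]) (use iD iI in auto)
    also have "\<dots> = 2 * (\<integral>S. Dv m \<tau> S \<partial>PS) + (\<integral>S. ind S \<partial>PS) + \<eta>"
      using iD iI by (simp add: P.prob_space)
    also have "\<dots> \<le> Bd + \<eta>" unfolding Bd_def using iD(2) iI(2) by (intro add_mono mult_left_mono) auto
    finally show ?thesis .
  qed
  then have "(\<integral>S. (risk D (hr e m \<tau> S) - I) \<partial>PS) \<le> Bd" by (rule field_le_epsilon)
  then show ?thesis unfolding I_def Bd_def by (simp add: add.assoc)
qed

end

lemma int_le_bound:
  fixes f :: "'a \<Rightarrow> real"
  assumes "prob_space M" "AE x in M. f x \<le> B" "0 \<le> B"
  shows "integral\<^sup>L M f \<le> B"
proof (cases "integrable M f")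
  case True
  interpret prob_space M by fact
  have "integral\<^sup>L M f \<le> (\<integral>x. B \<partial>M)"
    by (rule integral_mono_AE[OF True _ assms(2)]) simp
  then show ?thesis by (simp add: prob_space)
next
  case False
  then show ?thesis using assms(3) by (simp add: not_integrable_integral_eq)
qed

lemma risk_nonneg_gen: "0 \<le> risk D f"
  unfolding risk_def by simp

definition Vh :: "(nat \<Rightarrow> 'v::{real_inner,second_countable_topology}) \<Rightarrow> nat \<Rightarrow> ((nat \<Rightarrow> 'v \<times> 'v) \<Rightarrow> 'v \<Rightarrow> 'v) \<Rightarrow> ('v \<times> 'v) measure \<Rightarrow> real" where
  "Vh e n h D = (\<integral>S. (risk D (h S) - (INF f\<in>Fcl e. risk D f)) \<partial>(PiM {..<n} (\<lambda>_. D)))"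

lemma minimax_Vh: "minimax e n = (INF h\<in>rules e n. SUP D\<in>dists e. Vh e n h D)"
  unfolding minimax_def Vh_def ..

lemma INF_nonneg: "0 \<le> (INF f\<in>Fcl e. risk D f)"
  by (rule cINF_greatest) (auto simp: Fcl_def risk_nonneg_gen)

lemma Vh_le4:
  assumes h: "h \<in> rules e n" and D: "D \<in> dists e"
  shows "Vh e n h D \<le> 4"
proof -
  have pD: "prob_space D" and ae: "AE z in D. z \<in> Xset e \<times> Yset" using D unfolding dists_def by auto
  have r4: "risk D (h S) \<le> 4" for S unfolding risk_def
  proof (rule int_le_bound[OF pD])
    show "AE z in D. (norm (h S (fst z) - snd z))\<^sup>2 \<le> 4"
      using ae
    proof eventually_elim
      case (elim z)
      then have a: "norm (h S (fst z)) \<le> 1" "norm (snd z) \<le> 1"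
        using h unfolding rules_def Yset_def by auto
      have "norm (h S (fst z) - snd z) \<le> 2" using norm_triangle_ineq4[of "h S (fst z)" "snd z"] a by linarith
      then have "norm (h S (fst z) - snd z) * norm (h S (fst z) - snd z) \<le> 2 * 2"
        by (intro mult_mono) auto
      then show ?case by (simp add: power2_eq_square)
    qed
  qed simp
  have "prob_space (PiM {..<n} (\<lambda>_. D))" by (rule prob_space_PiM) (use pD in auto)
  moreover have "AE S in PiM {..<n} (\<lambda>_. D). risk D (h S) - (INF f\<in>Fcl e. risk D f) \<le> 4"
  proof (rule AE_I2)
    fix S show "risk D (h S) - (INF f\<in>Fcl e. risk D f) \<le> 4"
      using r4[of S] INF_nonneg[where e=e and D=D] by linarith
  qed
  ultimately show ?thesis unfolding Vh_def by (rule int_le_bound) simp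
qed

definition delta0 :: "('v::{real_inner,second_countable_topology} \<times> 'v) measure" where
  "delta0 = return borel (0, 0)"

lemma zero_X: "0 \<in> Xset e"
  unfolding Xset_def by (rule CollectI, rule exI[of _ "\<lambda>_. 0"]) simp

lemma delta0_dists: "delta0 \<in> dists e"
proof -
  have "AE z in delta0. z \<in> Xset e \<times> Yset"
  proof (rule AE_I')
    let ?N = "UNIV - {(0, 0)} :: ('a \<times> 'a) set"
    show "?N \<in> null_sets delta0"
      unfolding delta0_def by (auto simp: null_sets_def)
    show "{z \<in> space delta0. z \<notin> Xset e \<times> Yset} \<subseteq> ?N" using zero_X by (auto simp: Yset_def)
  qed
  then show ?thesis unfolding dists_def delta0_def by (auto intro: prob_space_return)
qed

lemma Vh_delta0:
  fixes e :: "nat \<Rightarrow> 'v::{real_inner,second_countable_topology}"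
  shows "0 \<le> Vh e n h (delta0 :: ('v \<times> 'v) measure)"
proof -
  have ms: "(\<lambda>z::'v \<times> 'v. (norm (0 - snd z))\<^sup>2) \<in> borel_measurable borel"
    by (intro borel_measurable_continuous_onI continuous_intros)
  have r0: "risk (delta0 :: ('v \<times> 'v) measure) (\<lambda>_. 0::'v) = 0" unfolding risk_def delta0_def
    by (subst integral_return[OF _ ms]) auto
  have bb: "bdd_below ((\<lambda>f. risk (delta0 :: ('v \<times> 'v) measure) f) ` Fcl e)"
    by (rule bdd_belowI2[where m=0]) (rule risk_nonneg_gen)
  have z: "(\<lambda>_. 0::'v) \<in> Fcl e" by (simp add: Fcl_def)
  have "(INF f\<in>Fcl e. risk (delta0 :: ('v \<times> 'v) measure) f) \<le> risk delta0 (\<lambda>_. 0::'v)"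
    by (rule cINF_lower[OF bb z])
  then have "(INF f\<in>Fcl e. risk delta0 f) \<le> 0" using r0 by simp
  then show ?thesis unfolding Vh_def
    by (intro Bochner_Integration.integral_nonneg) (use risk_nonneg_gen in \<open>auto intro: order_trans\<close>)
qed

lemma zero_rule: "(\<lambda>S x. 0) \<in> rules e n"
  unfolding rules_def Yset_def by simp

lemma SUP_nonneg:
  fixes e :: "nat \<Rightarrow> 'v::{real_inner,second_countable_topology}"
  assumes h: "h \<in> rules e n"
  shows "0 \<le> (SUP D\<in>dists e. Vh e n h D)"
proof -
  have bb: "bdd_above (Vh e n h ` dists e)"
    by (rule bdd_aboveI2[where M=4]) (rule Vh_le4[OF h])
  have "Vh e n h delta0 \<le> (SUP D\<in>dists e. Vh e n h D)"
    by (rule cSUP_upper[OF delta0_dists bb])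
  then show ?thesis using Vh_delta0[where e=e and n=n and h=h] by linarith
qed

lemma minimax_nonneg: "0 \<le> minimax e n"
  unfolding minimax_Vh by (rule cINF_greatest) (use zero_rule[of e n] SUP_nonneg in auto)

lemma minimax_le:
  assumes "h \<in> rules e n" "\<And>D. D \<in> dists e \<Longrightarrow> Vh e n h D \<le> B"
  shows "minimax e n \<le> B"
proof -
  have "minimax e n \<le> (SUP D\<in>dists e. Vh e n h D)"
    unfolding minimax_Vh by (rule cINF_lower[OF _ assms(1)]) (auto intro!: bdd_belowI2[of _ 0] SUP_nonneg)
  also have "\<dots> \<le> B" using delta0_dists by (intro cSUP_least assms(2)) auto
  finally show ?thesis .
qed

context ONB begin

lemma fk_Y: "1 \<le> k \<Longrightarrow> x \<in> Xset e \<Longrightarrow> fk e k x \<in> Yset"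
  unfolding Yset_def fk_eq using av_inner_X[of x k] norm_e[of k] by simp

lemma hr_rules:
  assumes "2 * m \<le> n"
  shows "hr e m \<tau> \<in> rules e n"
  unfolding rules_def
proof (intro CollectI conjI allI impI)
  let ?F = "\<lambda>k (p :: (nat \<Rightarrow> 'v \<times> 'v) \<times> 'v). if k = 0 then 0 else fk e k (snd p)"
  have "(\<lambda>p. ?F (khat e m \<tau> (fst p)) p) \<in> borel_measurable (PiM {..<n} (\<lambda>_. borel) \<Otimes>\<^sub>M borel)"
  proof (rule measurable_compose_countable)
    fix k
    show "?F k \<in> borel_measurable (PiM {..<n} (\<lambda>_. borel) \<Otimes>\<^sub>M borel)"
      unfolding fk_eq
      by (cases "k = 0") (auto intro!: measurable_compose[OF measurable_snd] borel_measurable_continuous_onI continuous_intros)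
    show "(\<lambda>p. khat e m \<tau> (fst p)) \<in> measurable (PiM {..<n} (\<lambda>_. borel) \<Otimes>\<^sub>M borel) (count_space UNIV)"
      by (rule measurable_compose[OF measurable_fst khat_meas[OF assms]])
  qed
  then show "(\<lambda>p. hr e m \<tau> (fst p) (snd p)) \<in> borel_measurable (PiM {..<n} (\<lambda>_. borel) \<Otimes>\<^sub>M borel)"
    unfolding hr_def by simp
  fix S x assume "x \<in> Xset e"
  then show "hr e m \<tau> S x \<in> Yset" unfolding hr_def using fk_Y by (auto simp: Yset_def)
qed

lemma minimax_bound:
  fixes m :: nat and \<tau> \<rho> :: real
  assumes m: "0 < m" "2 * m \<le> n" and \<tau>: "0 < \<tau>" and \<rho>: "0 < \<rho>"
  shows "minimax e n \<le> 2 * (\<rho> + 9 / (m * \<tau> * \<rho>)) + 2 * \<tau> + 4 / m"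
proof (rule minimax_le[OF hr_rules[OF m(2)]])
  fix D assume D: "D \<in> dists e"
  then have "LR e D"
    unfolding LR_def LR_axioms_def iid_def dists_def using ONB_axioms by auto
  from LR.excess_bound[OF this m \<tau> \<rho>] show "Vh e n (hr e m \<tau>) D \<le> 2 * (\<rho> + 9 / (m * \<tau> * \<rho>)) + 2 * \<tau> + 4 / m"
    unfolding Vh_def .
qed

end

definition tt :: "real \<Rightarrow> real" where "tt x = x powr (-1/4)"
definition ab :: "real \<Rightarrow> real" where
  "ab x = 2 * (tt x + 9 / (x * tt x * tt x)) + 2 * tt x + 4 / x"

lemma ab_lim: "(ab \<longlongrightarrow> 0) at_top"
  unfolding ab_def tt_def by real_asymp

lemma div2_lim: "filterlim (\<lambda>n::nat. real (n div 2)) at_top sequentially"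
  unfolding filterlim_at_top
proof
  fix Z :: real
  show "eventually (\<lambda>n. Z \<le> real (n div 2)) sequentially"
    unfolding eventually_sequentially
  proof (intro exI allI impI)
    fix n assume "2 * nat \<lceil>Z\<rceil> \<le> n"
    then have "nat \<lceil>Z\<rceil> \<le> n div 2" by linarith
    then show "Z \<le> real (n div 2)" by linarith
  qed
qed

context ONB begin

lemma minimax_lim: "(\<lambda>n. minimax e n) \<longlonglongrightarrow> 0"
proof (rule tendsto_sandwich[of "\<lambda>_. 0" _ _ "\<lambda>n. ab (real (n div 2))"])
  show "eventually (\<lambda>n. 0 \<le> minimax e n) sequentially" by (simp add: minimax_nonneg)
  show "eventually (\<lambda>n. minimax e n \<le> ab (real (n div 2))) sequentially"
    unfolding eventually_sequentially
  proof (intro exI allI impI)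
    fix n :: nat assume n: "2 \<le> n"
    define m where "m = n div 2"
    have m: "0 < m" "2 * m \<le> n" using n unfolding m_def by auto
    have t: "0 < tt (real m)" unfolding tt_def using m by simp
    show "minimax e n \<le> ab (real (n div 2))"
      using minimax_bound[OF m t t] unfolding ab_def m_def by simp
  qed
  show "(\<lambda>n. ab (real (n div 2))) \<longlonglongrightarrow> 0"
    by (rule filterlim_compose[OF ab_lim div2_lim])
qed simp

lemma part3: "limsup (\<lambda>n. ereal (minimax e n)) = 0"
proof -
  have "(\<lambda>n. ereal (minimax e n)) \<longlonglongrightarrow> ereal 0"
    using minimax_lim by (rule tendsto_ereal)
  then have "limsup (\<lambda>n. ereal (minimax e n)) = ereal 0"
    by (rule lim_imp_Limsup[OF trivial_limit_sequentially])
  then show ?thesis by (simp add: zero_ereal_def)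
qed

lemma main: "Fcl e \<subseteq> {T. trace_class T}
    \<and> (\<forall>T::nat. (\<forall>t\<in>{1..T}. e t \<in> Xset e \<and> (0::'v) \<in> Yset)
                 \<and> rad_sup e T e (\<lambda>_. 0) \<ge> real T / 2)
    \<and> limsup (\<lambda>n. ereal (minimax e n)) = 0"
  using part1 part2 part3 e_in_X by (auto simp: Yset_def)

end

theorem mainTheorem7:
  fixes e :: "nat \<Rightarrow> 'v::{real_inner, complete_space, second_countable_topology}"
  assumes "onb e"
  shows "Fcl e \<subseteq> {T. trace_class T}
    \<and> (\<forall>T::nat. (\<forall>t\<in>{1..T}. e t \<in> Xset e \<and> (0::'v) \<in> Yset)
                 \<and> rad_sup e T e (\<lambda>_. 0) \<ge> real T / 2)
    \<and> limsup (\<lambda>n. ereal (minimax e n)) = 0"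
  by (rule ONB.main[OF ONB.intro[OF assms]])

end
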